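(* Let $f(z)=z+a_2z^2+a_3z^3+\cdots$ be analytic in the unit disk $\mathbb{D}=\{z:|z|<1\}$ with $a_2=0$, and let $f^{-1}(w)=w+A_2w^2+A_3w^3+A_4w^4+A_5w^5+\cdots$ be the expansion of its inverse function near $w=0$. Set $H_2(3)(f^{-1})=A_3A_5-A_4^2$. Then: (a) if $\operatorname{Re} f'(z)>0$ for all $z\in\mathbb{D}$, then $|H_2(3)(f^{-1})|\le \frac{28}{45}$; (b) if $\operatorname{Re}\left[1+\frac{zf''(z)}{f'(z)}\right]>0$ for all $z\in\mathbb{D}$, then $|H_2(3)(f^{-1})|\le \frac{2}{45}$; (c) if $\operatorname{Re}\frac{zf'(z)}{f(z)}>0$ for all $z\in\mathbb{D}$, then $|H_2(3)(f^{-1})|\le 2$; (d) if $\operatorname{Re}\frac{2zf'(z)}{f(z)-f(-z)}>0$ for all $z\in\mathbb{D}$, then $|H_2(3)(f^{-1})|\le 2$. All these bounds are sharp, i.e., in each case the bound is attained by some function $f$ in the respective class with $a_2=0$.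
   Context: The four conditions define, respectively, the classes of functions of bounded turning, convex functions, starlike functions, and functions starlike with respect to symmetric points (all normalized by $f(0)=0$, $f'(0)=1$); such functions are univalent in $\mathbb{D}$, so $f^{-1}$ exists and is analytic in a neighbourhood of $0$. *)

theory Defs
  imports "HOL-Complex_Analysis.Complex_Analysis"
begin

definition tcoeff :: "(complex \<Rightarrow> complex) \<Rightarrow> nat \<Rightarrow> complex" where
  "tcoeff f n = (deriv ^^ n) f 0 / of_nat (fact n)"

definition normalized_analytic :: "(complex \<Rightarrow> complex) \<Rightarrow> bool" where
  "normalized_analytic f \<longleftrightarrow> f holomorphic_on ball 0 1 \<and> f 0 = 0 \<and> deriv f 0 = 1"

definition local_inverse ::
  "(complex \<Rightarrow> complex) \<Rightarrow> (complex \<Rightarrow> complex) \<Rightarrow> complex set \<Rightarrow> bool" where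
  "local_inverse f g S \<longleftrightarrow> open S \<and> 0 \<in> S \<and> g holomorphic_on S \<and> g 0 = 0 \<and>
     g ` S \<subseteq> ball 0 1 \<and> (\<forall>w\<in>S. f (g w) = w)"

definition hankel23 :: "(complex \<Rightarrow> complex) \<Rightarrow> complex" where
  "hankel23 g = tcoeff g 3 * tcoeff g 5 - (tcoeff g 4)^2"

definition bounded_turning :: "(complex \<Rightarrow> complex) \<Rightarrow> bool" where
  "bounded_turning f \<longleftrightarrow> normalized_analytic f \<and>
     (\<forall>z\<in>ball 0 1. Re (deriv f z) > 0)"

definition convex_fun :: "(complex \<Rightarrow> complex) \<Rightarrow> bool" where
  "convex_fun f \<longleftrightarrow> normalized_analytic f \<and>
     (\<forall>z\<in>ball 0 1. deriv f z \<noteq> 0 \<and>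
        Re (1 + z * deriv (deriv f) z / deriv f z) > 0)"

definition starlike_fun :: "(complex \<Rightarrow> complex) \<Rightarrow> bool" where
  "starlike_fun f \<longleftrightarrow> normalized_analytic f \<and>
     (\<forall>z\<in>ball 0 1 - {0}. f z \<noteq> 0 \<and> Re (z * deriv f z / f z) > 0)"

definition starlike_sym :: "(complex \<Rightarrow> complex) \<Rightarrow> bool" where
  "starlike_sym f \<longleftrightarrow> normalized_analytic f \<and>
     (\<forall>z\<in>ball 0 1 - {0}. f z - f (-z) \<noteq> 0 \<and>
        Re (2 * z * deriv f z / (f z - f (-z))) > 0)"

definition sharp_inv_hankel_bound :: "((complex \<Rightarrow> complex) \<Rightarrow> bool) \<Rightarrow> real \<Rightarrow> bool" where
  "sharp_inv_hankel_bound P B \<longleftrightarrow>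
     (\<forall>f g S. P f \<and> tcoeff f 2 = 0 \<and> local_inverse f g S \<longrightarrow> cmod (hankel23 g) \<le> B) \<and>
     (\<exists>f g S. P f \<and> tcoeff f 2 = 0 \<and> local_inverse f g S \<and> cmod (hankel23 g) = B)"

end

theory Submission
  imports Defs
begin
lemma tcoeff_eq_nth:
  assumes "f has_fps_expansion F" shows "tcoeff f n = F $ n"
  using fps_nth_fps_expansion[OF assms] by (simp add: tcoeff_def)

lemma fps_expansion_eq:
  fixes f g :: "complex \<Rightarrow> complex"
  assumes "f has_fps_expansion F" "g has_fps_expansion G"
    and "eventually (\<lambda>z. f z = g z) (nhds 0)"
  shows "F = G"
proof -
  from assms(2) have r: "fps_conv_radius G > 0" and ev: "eventually (\<lambda>z. eval_fps G z = g z) (nhds 0)"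
    by (auto simp: has_fps_expansion_def)
  have "eventually (\<lambda>z. eval_fps G z = f z) (nhds 0)" using ev assms(3) by eventually_elim simp
  then have "f has_fps_expansion G" using r by (simp add: has_fps_expansion_def)
  then show ?thesis
    by (intro fps_ext) (simp add: fps_nth_fps_expansion[OF assms(1)] fps_nth_fps_expansion[OF \<open>f has_fps_expansion G\<close>])
qed

lemma set05: "{0..5::nat} = {0,1,2,3,4,5}" "{0..4::nat} = {0,1,2,3,4}" "{0..3::nat} = {0,1,2,3}"
  "{0..2::nat} = {0,1,2}" "{0..1::nat} = {0,1}" by auto

lemma compose_coeffs:
  fixes F G :: "complex fps"
  assumes "F oo G = fps_X" "G $ 0 = 0" "F $ 0 = 0" "F $ 1 = 1" "F $ 2 = 0"
  shows "G $ 1 = 1" "G $ 2 = 0" "G $ 3 = - (F $ 3)" "G $ 4 = - (F $ 4)"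
        "G $ 5 = 3 * (F $ 3)^2 - F $ 5"
proof -
  have e: "(F oo G) $ n = fps_X $ n" for n using assms(1) by simp
  have p: "(G^k) $ k = (G $ 1)^k" for k using startsby_zero_power_nth_same[OF assms(2)] by simp
  have z: "(G^k) $ j = 0" if "j < k" for j k using startsby_zero_power_prefix[OF assms(2)] that by simp
  have "(F oo G) $ 1 = F $ 1 * G $ 1" using assms(2-) p z by (simp add: fps_compose_nth set05)
  then have e1: "G $ 1 = 1" using e[of 1] assms(4) by simp
  show "G $ 1 = 1" by fact
  have "(F oo G) $ 2 = G $ 2" using assms(2-) p z by (simp add: fps_compose_nth set05)
  then have e2: "G $ 2 = 0" using e[of 2] by simp
  show "G $ 2 = 0" by fact
  have sq: "(G^2) $ 3 = 0" "(G^2) $ 4 = 2 * G $ 3"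
    using assms(2) e1 e2 by (simp_all add: power2_eq_square fps_mult_nth set05)
  have c3: "G^3 = G^2 * G" by (simp add: power3_eq_cube power2_eq_square)
  have g3: "(G^3) $ 4 = 0" "(G^3) $ 5 = 3 * G $ 3"
    unfolding c3 using sq assms(2) e1 e2 p[of 2] z[of _ 2] by (simp_all add: fps_mult_nth set05)
  have c4: "G^4 = G^3 * G" using power_Suc2[of G 3] by simp
  have g4: "(G^4) $ 5 = 0"
    unfolding c4 using g3 p[of 3] z[of _ 3] assms(2) e1 e2 by (simp add: fps_mult_nth set05)
  have s3: "(F oo G) $ 3 = G $ 3 + F $ 3"
    using assms(2-) e1 e2 p z by (simp add: fps_compose_nth set05)
  show e3: "G $ 3 = - (F $ 3)" using s3 e[of 3] by (simp add: eq_neg_iff_add_eq_0)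
  have s4: "(F oo G) $ 4 = G $ 4 + F $ 4"
    using assms(2-) e1 e2 p z g3 by (simp add: fps_compose_nth set05)
  show "G $ 4 = - (F $ 4)" using s4 e[of 4] by (simp add: eq_neg_iff_add_eq_0)
  have s5: "(F oo G) $ 5 = G $ 5 + F $ 3 * (3 * G $ 3) + F $ 5"
    using assms(2-) e1 e2 p z g3 g4 by (simp add: fps_compose_nth set05)
  show "G $ 5 = 3 * (F $ 3)^2 - F $ 5" using s5 e[of 5] e3
    by (simp add: algebra_simps power2_eq_square)
qed

lemma tcoeff_fps: "tcoeff f n = fps_expansion f 0 $ n"
  by (simp add: tcoeff_def fps_expansion_def)

lemma hol_fps: "f holomorphic_on ball 0 r \<Longrightarrow> r > 0 \<Longrightarrow> f has_fps_expansion fps_expansion f 0"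
  by (rule has_fps_expansion_fps_expansion[of "ball 0 r"]) auto

lemma fps_mult_ident:
  fixes f g h :: "complex \<Rightarrow> complex"
  assumes "f has_fps_expansion F" "g has_fps_expansion G" "h has_fps_expansion H"
    and "eventually (\<lambda>z. f z * g z = h z) (nhds 0)"
  shows "F * G = H"
  using fps_expansion_eq[OF has_fps_expansion_mult[OF assms(1,2)] assms(3)] assms(4) by simp

lemma ev_ball: "r > 0 \<Longrightarrow> (\<And>z. z \<in> ball 0 r \<Longrightarrow> P z) \<Longrightarrow> eventually P (nhds (0::complex))"
  using eventually_nhds_in_open[of "ball 0 r" 0] by (auto elim: eventually_mono)

lemma schwarz_le:
  fixes \<phi> :: "complex \<Rightarrow> complex"
  assumes hol: "\<phi> holomorphic_on ball 0 1" and z0: "\<phi> 0 = 0"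
    and bd: "\<And>z. z \<in> ball 0 1 \<Longrightarrow> norm (\<phi> z) \<le> 1"
  shows "\<And>z. z \<in> ball 0 1 \<Longrightarrow> norm (\<phi> z) \<le> norm z" and "norm (deriv \<phi> 0) \<le> 1"
proof -
  have S: "norm (of_real r * \<phi> z) \<le> norm z \<and> norm (deriv (\<lambda>z. of_real r * \<phi> z) 0) \<le> 1"
    if r: "0 < r" "r < 1" and z: "z \<in> ball 0 1" for r z
  proof -
    have h2: "(\<lambda>z. of_real r * \<phi> z) holomorphic_on ball 0 1" using hol by (intro holomorphic_intros)
    have lt: "norm (of_real r * \<phi> w) < 1" if "norm w < 1" for w
    proof -
      have "norm (of_real r * \<phi> w) = r * norm (\<phi> w)" using r by (simp add: norm_mult)
      also have "\<dots> \<le> r * 1" using bd[of w] that r by (intro mult_left_mono) auto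
      finally show ?thesis using r by simp
    qed
    show ?thesis using Schwarz_Lemma(1,2)[OF h2 _ lt, of z] z z0 by auto
  qed
  have dd: "deriv (\<lambda>z. of_real r * \<phi> z) 0 = of_real r * deriv \<phi> 0" for r
    using hol by (intro deriv_cmult) (auto intro!: holomorphic_on_imp_differentiable_at)
  show "norm (\<phi> z) \<le> norm z" if "z \<in> ball 0 1" for z
  proof (rule field_le_mult_one_interval)
    fix r :: real assume "0 < r" "r < 1"
    then show "r * norm (\<phi> z) \<le> norm z" using S[OF _ _ that, of r] by (simp add: norm_mult)
  qed
  show "norm (deriv \<phi> 0) \<le> 1"
  proof (rule field_le_mult_one_interval)
    fix r :: real assume "0 < r" "r < 1"
    then show "r * norm (deriv \<phi> 0) \<le> 1" using S[of r 0] dd[of r] by (simp add: norm_mult)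
  qed
qed

lemma divz:
  fixes \<phi> :: "complex \<Rightarrow> complex"
  assumes hol: "\<phi> holomorphic_on ball 0 1" and z0: "\<phi> 0 = 0"
  defines "\<psi> \<equiv> \<lambda>z. if z = 0 then deriv \<phi> 0 else \<phi> z / z"
  shows "\<psi> holomorphic_on ball 0 1" "\<And>z. \<phi> z = z * \<psi> z" "\<And>n. tcoeff \<psi> n = tcoeff \<phi> (Suc n)"
    "(\<And>z. z \<in> ball 0 1 \<Longrightarrow> norm (\<phi> z) \<le> 1) \<Longrightarrow> z \<in> ball 0 1 \<Longrightarrow> norm (\<psi> z) \<le> 1"
proof -
  show h: "\<psi> holomorphic_on ball 0 1"
  proof -
    have "(\<lambda>z. if z = 0 then deriv \<phi> 0 else (\<phi> z - \<phi> 0) / (z - 0)) = \<psi>"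
      by (auto simp: \<psi>_def z0 fun_eq_iff)
    then show ?thesis using pole_lemma_open[OF hol, of 0] by simp
  qed
  show e: "\<phi> z = z * \<psi> z" for z by (simp add: \<psi>_def z0)
  have "fps_X * fps_expansion \<psi> 0 = fps_expansion \<phi> 0"
    by (rule fps_expansion_eq[OF has_fps_expansion_mult[OF has_fps_expansion_fps_X hol_fps[OF h]]
          hol_fps[OF hol]]) (auto simp: e)
  then show "tcoeff \<psi> n = tcoeff \<phi> (Suc n)" for n
    by (metis diff_Suc_1 fps_X_mult_nth nat.distinct(1) tcoeff_fps)
  assume bd: "\<And>z. z \<in> ball 0 1 \<Longrightarrow> norm (\<phi> z) \<le> 1" and z: "z \<in> ball 0 1"
  show "norm (\<psi> z) \<le> 1"
  proof (cases "z = 0")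
    case True then show ?thesis using schwarz_le(2)[OF hol z0 bd] by (simp add: \<psi>_def)
  next
    case False then show ?thesis using schwarz_le(1)[OF hol z0 bd z]
      by (simp add: \<psi>_def norm_divide divide_le_eq_1)
  qed
qed

lemma mobius:
  fixes a w :: complex
  assumes "norm a < 1" "norm w < 1"
  shows "1 - cnj a * w \<noteq> 0" "norm ((w - a) / (1 - cnj a * w)) < 1"
proof -
  have id: "(cmod (1 - cnj a * w))^2 - (cmod (w - a))^2 = (1 - (cmod a)^2) * (1 - (cmod w)^2)"
    unfolding cmod_power2 by (simp add: algebra_simps power2_eq_square)
  have "(1 - (cmod a)^2) * (1 - (cmod w)^2) > 0"
    using assms by (intro mult_pos_pos) (auto simp: power_less_one_iff abs_square_less_1)
  then have lt: "(cmod (w - a))^2 < (cmod (1 - cnj a * w))^2" using id by linarith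
  then show nz: "1 - cnj a * w \<noteq> 0" by auto
  have "cmod (w - a) < cmod (1 - cnj a * w)" using lt by (simp add: power_less_imp_less_base)
  then show "norm ((w - a) / (1 - cnj a * w)) < 1" using nz by (simp add: norm_divide divide_less_eq_1)
qed

lemma tcoeff_0: "tcoeff f 0 = f 0" and tcoeff_1: "tcoeff f 1 = deriv f 0"
  by (simp_all add: tcoeff_def)

lemma cnj_mult_self: "cnj a * a = complex_of_real ((cmod a)^2)"
  using complex_norm_square[of a] by (simp add: mult.commute)

lemma pick1:
  fixes \<phi> :: "complex \<Rightarrow> complex"
  assumes hol: "\<phi> holomorphic_on ball 0 1" and bd: "\<And>z. z \<in> ball 0 1 \<Longrightarrow> norm (\<phi> z) \<le> 1"
  shows "norm (deriv \<phi> 0) \<le> 1 - (norm (\<phi> 0))^2"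
proof -
  define c0 where "c0 = \<phi> 0"
  define c1 where "c1 = deriv \<phi> 0"
  have key: "r * norm c1 + r^2 * (norm c0)^2 \<le> 1" if r: "0 < r" "r < 1" for r
  proof -
    define a where "a = of_real r * c0"
    have na: "norm a < 1"
    proof -
      have "norm a = r * norm c0" using r by (simp add: a_def norm_mult)
      also have "\<dots> \<le> r * 1" using bd[of 0] r by (intro mult_left_mono) (auto simp: c0_def)
      finally show ?thesis using r by simp
    qed
    define w where "w = (\<lambda>z. of_real r * \<phi> z)"
    have nw: "norm (w z) < 1" if "z \<in> ball 0 1" for z
    proof -
      have "norm (w z) = r * norm (\<phi> z)" using r by (simp add: w_def norm_mult)
      also have "\<dots> \<le> r * 1" using bd[OF that] r by (intro mult_left_mono) auto
      finally show ?thesis using r by simp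
    qed
    define \<psi> where "\<psi> = (\<lambda>z. (w z - a) / (1 - cnj a * w z))"
    have holw: "w holomorphic_on ball 0 1" unfolding w_def using hol by (intro holomorphic_intros)
    have hol\<psi>: "\<psi> holomorphic_on ball 0 1" unfolding \<psi>_def
      using holw mobius(1)[OF na nw] by (intro holomorphic_intros) auto
    have \<psi>0: "\<psi> 0 = 0" by (simp add: \<psi>_def w_def a_def c0_def)
    have n\<psi>: "norm (\<psi> z) < 1" if "norm z < 1" for z
      using mobius(2)[OF na nw[of z]] that by (simp add: \<psi>_def)
    have d\<psi>: "norm (deriv \<psi> 0) \<le> 1" using Schwarz_Lemma(2)[OF hol\<psi> \<psi>0 n\<psi>, of 0] by simp
    define \<Phi> where "\<Phi> = fps_expansion \<phi> 0"
    define \<Psi> where "\<Psi> = fps_expansion \<psi> 0"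
    have E\<phi>: "\<phi> has_fps_expansion \<Phi>" unfolding \<Phi>_def by (rule hol_fps[OF hol]) simp
    have E\<psi>: "\<psi> has_fps_expansion \<Psi>" unfolding \<Psi>_def by (rule hol_fps[OF hol\<psi>]) simp
    have E1: "(\<lambda>z. 1 - cnj a * w z) has_fps_expansion 1 - fps_const (cnj a) * (fps_const (of_real r) * \<Phi>)"
      unfolding w_def by (intro fps_expansion_intros E\<phi>)
    have E2: "(\<lambda>z. w z - a) has_fps_expansion fps_const (of_real r) * \<Phi> - fps_const a"
      unfolding w_def by (intro fps_expansion_intros E\<phi>)
    have id: "\<Psi> * (1 - fps_const (cnj a) * (fps_const (of_real r) * \<Phi>)) = fps_const (of_real r) * \<Phi> - fps_const a"
    proof (rule fps_mult_ident[OF E\<psi> E1 E2], rule ev_ball[of 1])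
      fix z :: complex assume "z \<in> ball 0 1"
      then have "1 - cnj a * w z \<noteq> 0" by (rule mobius(1)[OF na nw])
      then show "\<psi> z * (1 - cnj a * w z) = w z - a" by (simp add: \<psi>_def)
    qed simp
    have "(\<Psi> * (1 - fps_const (cnj a) * (fps_const (of_real r) * \<Phi>))) $ 1 = (fps_const (of_real r) * \<Phi> - fps_const a) $ 1"
      by (simp only: id)
    moreover have "\<Psi> $ 0 = 0" "\<Psi> $ 1 = deriv \<psi> 0" "\<Phi> $ 0 = c0" "\<Phi> $ 1 = c1"
      by (simp_all add: \<Psi>_def \<Phi>_def fps_expansion_def \<psi>0 c0_def c1_def)
    ultimately have "deriv \<psi> 0 * (1 - cnj a * (of_real r * c0)) = of_real r * c1"
      by (simp add: fps_mult_nth set05)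
    then have eq: "deriv \<psi> 0 * of_real (1 - (cmod a)^2) = of_real r * c1"
      by (simp add: a_def[symmetric] cnj_mult_self)
    have pa: "0 \<le> 1 - (cmod a)^2" using na by (simp add: abs_square_le_1 less_imp_le)
    have "norm (deriv \<psi> 0 * of_real (1 - (cmod a)^2)) = norm (of_real r * c1)"
      using eq by simp
    then have "r * norm c1 = norm (deriv \<psi> 0) * (1 - (cmod a)^2)"
      using pa r unfolding norm_mult norm_of_real by simp
    also have "\<dots> \<le> 1 * (1 - (cmod a)^2)"
      using d\<psi> na by (intro mult_right_mono) (auto simp: abs_square_less_1 power_le_one)
    finally show ?thesis using r by (simp add: a_def norm_mult power_mult_distrib)
  qed
  have lim: "((\<lambda>r. r * norm c1 + r^2 * (norm c0)^2) \<longlongrightarrow> 1 * norm c1 + 1^2 * (norm c0)^2) (at_left 1)"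
    by (intro tendsto_intros)
  have ev: "eventually (\<lambda>r. r * norm c1 + r^2 * (norm c0)^2 \<le> 1) (at_left (1::real))"
    using eventually_at_left_real[of 0 "1::real"] by (auto elim!: eventually_mono intro: key)
  have "1 * norm c1 + 1^2 * (norm c0)^2 \<le> 1"
    by (rule tendsto_upperbound[OF lim ev]) simp
  then show ?thesis by (simp add: c0_def c1_def)
qed

lemma schur2_strict:
  fixes \<phi> :: "complex \<Rightarrow> complex"
  assumes hol: "\<phi> holomorphic_on ball 0 1" and bd: "\<And>z. z \<in> ball 0 1 \<Longrightarrow> norm (\<phi> z) < 1"
  shows "norm (tcoeff \<phi> 2 * of_real (1 - (norm (tcoeff \<phi> 0))^2) + cnj (tcoeff \<phi> 0) * (tcoeff \<phi> 1)^2)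
           \<le> (1 - (norm (tcoeff \<phi> 0))^2)^2 - (norm (tcoeff \<phi> 1))^2"
proof -
  define c0 where "c0 = tcoeff \<phi> 0"
  define c1 where "c1 = tcoeff \<phi> 1"
  define c2 where "c2 = tcoeff \<phi> 2"
  define d where "d = 1 - (norm c0)^2"
  have c0v: "c0 = \<phi> 0" by (simp add: c0_def tcoeff_0)
  have nc0: "norm c0 < 1" using bd[of 0] by (simp add: c0v)
  have dpos: "d > 0" using nc0 by (simp add: d_def abs_square_less_1)
  define M where "M = (\<lambda>z. (\<phi> z - c0) / (1 - cnj c0 * \<phi> z))"
  have nz: "1 - cnj c0 * \<phi> z \<noteq> 0" if "z \<in> ball 0 1" for z using mobius(1)[OF nc0 bd[OF that]] .
  have holM: "M holomorphic_on ball 0 1" unfolding M_def using hol nz by (intro holomorphic_intros) auto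
  have M0: "M 0 = 0" by (simp add: M_def c0v)
  have nM: "norm (M z) \<le> 1" if "z \<in> ball 0 1" for z
    using mobius(2)[OF nc0 bd[OF that]] by (simp add: M_def)
  define K where "K = (\<lambda>z. if z = 0 then deriv M 0 else M z / z)"
  have holK: "K holomorphic_on ball 0 1" and tK: "\<And>n. tcoeff K n = tcoeff M (Suc n)"
    and nK: "\<And>z. z \<in> ball 0 1 \<Longrightarrow> norm (K z) \<le> 1"
    using divz[OF holM M0] nM unfolding K_def by auto
  have pk: "norm (tcoeff M 2) \<le> 1 - (norm (tcoeff M 1))^2"
  proof -
    have a: "deriv K 0 = tcoeff M 2" using tK[of 1] tcoeff_1[of K] by (simp add: numeral_2_eq_2)
    have b: "K 0 = tcoeff M 1" using tK[of 0] tcoeff_0[of K] by simp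
    show ?thesis using pick1[OF holK nK] unfolding a b .
  qed
  define \<Phi> where "\<Phi> = fps_expansion \<phi> 0"
  define Mf where "Mf = fps_expansion M 0"
  have E\<phi>: "\<phi> has_fps_expansion \<Phi>" unfolding \<Phi>_def by (rule hol_fps[OF hol]) simp
  have EM: "M has_fps_expansion Mf" unfolding Mf_def by (rule hol_fps[OF holM]) simp
  have E1: "(\<lambda>z. 1 - cnj c0 * \<phi> z) has_fps_expansion 1 - fps_const (cnj c0) * \<Phi>"
    by (intro fps_expansion_intros E\<phi>)
  have E2: "(\<lambda>z. \<phi> z - c0) has_fps_expansion \<Phi> - fps_const c0"
    by (intro fps_expansion_intros E\<phi>)
  have id: "Mf * (1 - fps_const (cnj c0) * \<Phi>) = \<Phi> - fps_const c0"
  proof (rule fps_mult_ident[OF EM E1 E2], rule ev_ball[of 1])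
    fix z :: complex assume "z \<in> ball 0 1"
    then have "1 - cnj c0 * \<phi> z \<noteq> 0" by (rule nz)
    then show "M z * (1 - cnj c0 * \<phi> z) = \<phi> z - c0" by (simp add: M_def)
  qed simp
  have co: "\<Phi> $ 0 = c0" "\<Phi> $ 1 = c1" "\<Phi> $ 2 = c2" "Mf $ 0 = 0"
    by (simp_all add: \<Phi>_def c0_def c1_def c2_def tcoeff_fps) (simp add: Mf_def fps_expansion_def M0)
  define m1 where "m1 = Mf $ 1"
  define m2 where "m2 = Mf $ 2"
  have D: "1 - cnj c0 * c0 = of_real d" by (simp add: d_def cnj_mult_self)
  have "(Mf * (1 - fps_const (cnj c0) * \<Phi>)) $ 1 = (\<Phi> - fps_const c0) $ 1" by (simp only: id)
  then have e1: "m1 * of_real d = c1"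
    using co by (simp add: fps_mult_nth set05 m1_def flip: D)
  have "(Mf * (1 - fps_const (cnj c0) * \<Phi>)) $ 2 = (\<Phi> - fps_const c0) $ 2" by (simp only: id)
  then have e2: "m1 * (- (cnj c0 * c1)) + m2 * of_real d = c2"
    using co by (simp add: fps_mult_nth set05 m1_def m2_def flip: D)
  have pk': "norm m2 \<le> 1 - (norm m1)^2"
    using pk by (simp add: m1_def m2_def Mf_def tcoeff_fps)
  have "c2 * of_real d + cnj c0 * c1^2 = (of_real d)^2 * m2"
    by (simp only: e2[symmetric] e1[symmetric]) (simp add: algebra_simps power2_eq_square)
  then have "norm (c2 * of_real d + cnj c0 * c1^2) = d^2 * norm m2"
    using dpos by (simp add: norm_mult norm_power)
  also have "\<dots> \<le> d^2 * (1 - (norm m1)^2)" using pk' by (intro mult_left_mono) auto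
  also have "\<dots> = d^2 - (norm c1)^2"
    using dpos by (simp add: flip: e1) (simp add: norm_mult power_mult_distrib algebra_simps)
  finally show ?thesis by (simp add: c0_def c1_def c2_def d_def)
qed

lemma tcoeff_scale:
  fixes \<phi> :: "complex \<Rightarrow> complex"
  assumes hol: "\<phi> holomorphic_on ball 0 1"
  shows "tcoeff (\<lambda>z. c * \<phi> z) n = c * tcoeff \<phi> n"
proof -
  have E: "\<phi> has_fps_expansion fps_expansion \<phi> 0" by (rule hol_fps[OF hol]) simp
  have "(\<lambda>z. c * \<phi> z) has_fps_expansion fps_const c * fps_expansion \<phi> 0"
    by (intro fps_expansion_intros E)
  then have "tcoeff (\<lambda>z. c * \<phi> z) n = (fps_const c * fps_expansion \<phi> 0) $ n" by (rule tcoeff_eq_nth)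
  then show ?thesis by (simp add: tcoeff_fps)
qed

lemma schur2:
  fixes \<phi> :: "complex \<Rightarrow> complex"
  assumes hol: "\<phi> holomorphic_on ball 0 1" and bd: "\<And>z. z \<in> ball 0 1 \<Longrightarrow> norm (\<phi> z) \<le> 1"
  shows "norm (tcoeff \<phi> 2 * of_real (1 - (norm (tcoeff \<phi> 0))^2) + cnj (tcoeff \<phi> 0) * (tcoeff \<phi> 1)^2)
           \<le> (1 - (norm (tcoeff \<phi> 0))^2)^2 - (norm (tcoeff \<phi> 1))^2"
proof -
  define c0 where "c0 = tcoeff \<phi> 0"
  define c1 where "c1 = tcoeff \<phi> 1"
  define c2 where "c2 = tcoeff \<phi> 2"
  define g where "g = (\<lambda>r::real. norm (of_real r * c2 * of_real (1 - (norm (of_real r * c0))^2)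
      + cnj (of_real r * c0) * (of_real r * c1)^2))"
  define h where "h = (\<lambda>r::real. (1 - (norm (of_real r * c0))^2)^2 - (norm (of_real r * c1))^2)"
  have key: "g r \<le> h r" if r: "0 < r" "r < 1" for r
  proof -
    have hol': "(\<lambda>z. of_real r * \<phi> z) holomorphic_on ball 0 1" using hol by (intro holomorphic_intros)
    have bd': "norm (of_real r * \<phi> z) < 1" if "z \<in> ball 0 1" for z
    proof -
      have "norm (of_real r * \<phi> z) = r * norm (\<phi> z)" using r by (simp add: norm_mult)
      also have "\<dots> \<le> r * 1" using bd[OF that] r by (intro mult_left_mono) auto
      finally show ?thesis using r by simp
    qed
    show ?thesis using schur2_strict[OF hol' bd'] unfolding tcoeff_scale[OF hol]
      by (simp add: g_def h_def c0_def c1_def c2_def)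
  qed
  have cg: "isCont g 1" unfolding g_def by (intro continuous_intros)
  have ch: "isCont h 1" unfolding h_def by (intro continuous_intros)
  have lg: "(g \<longlongrightarrow> g 1) (at_left 1)" using cg
    unfolding isCont_def by (rule tendsto_within_subset) simp
  have lh: "(h \<longlongrightarrow> h 1) (at_left 1)" using ch
    unfolding isCont_def by (rule tendsto_within_subset) simp
  have ev: "eventually (\<lambda>r. g r \<le> h r) (at_left (1::real))"
    using eventually_at_left_real[of 0 "1::real"] by (auto elim!: eventually_mono intro: key)
  have "g 1 \<le> h 1" by (rule tendsto_le[OF _ lh lg ev]) simp
  then show ?thesis by (simp add: g_def h_def c0_def c1_def c2_def)
qed

lemma maxmod_coeff:
  fixes \<phi> :: "complex \<Rightarrow> complex"
  assumes hol: "\<phi> holomorphic_on ball 0 1" and bd: "\<And>z. z \<in> ball 0 1 \<Longrightarrow> norm (\<phi> z) \<le> 1"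
    and one: "norm (\<phi> 0) = 1"
  shows "tcoeff \<phi> (Suc n) = 0"
proof -
  have "\<phi> constant_on ball 0 1"
    by (rule maximum_modulus_principle[OF hol open_ball connected_ball open_ball subset_refl, of 0])
       (use bd one in auto)
  then obtain c where c: "\<And>z. z \<in> ball 0 1 \<Longrightarrow> \<phi> z = c" by (auto simp: constant_on_def)
  have "fps_expansion \<phi> 0 = fps_const c"
    by (rule fps_expansion_eq[OF hol_fps[OF hol] has_fps_expansion_const]) (auto intro!: ev_ball[of 1] c)
  then show ?thesis by (simp add: tcoeff_fps)
qed

lemma real_core:
  fixes s t aa bb cc :: real
  assumes s: "0 \<le> s" "s < 1" and t: "0 \<le> t" "t \<le> 1 - s^2" and bb: "0 \<le> bb" "bb \<le> 2 * cc"
    and beta: "aa * (1+s+s^2) - bb * s^2 * (1+s) - cc * (1-s) * (1+s)^2 \<ge> 0"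
  shows "aa * (1-s^2) * s^3 + bb * s * ((1-s^2)^2 - t^2 + s * t^2) + cc * (1-s^2) * t^2 \<le> aa * (1-s^2)"
proof -
  define d where "d = 1 - s^2"
  define \<kappa> where "\<kappa> = cc * d - bb * s * (1-s)"
  define \<beta> where "\<beta> = aa * (1+s+s^2) - bb * s^2 * (1+s) - cc * (1-s) * (1+s)^2"
  have d0: "d > 0" using s by (simp add: d_def abs_square_less_1)
  have k1: "\<kappa> = (1-s) * (cc * (1+s) - bb * s)" by (simp add: \<kappa>_def d_def algebra_simps power2_eq_square)
  have "cc * (1+s) - bb * s \<ge> 0"
  proof -
    have "bb * s \<le> bb * ((1+s)/2)" using bb s by (intro mult_left_mono) auto
    also have "\<dots> \<le> 2 * cc * ((1+s)/2)" using bb s by (intro mult_right_mono) auto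
    finally show ?thesis by simp
  qed
  then have k0: "\<kappa> \<ge> 0" using s k1 by simp
  have tt: "t^2 \<le> d^2" using t by (intro power_mono) (auto simp: d_def)
  have "aa * (1-s^2) * s^3 + bb * s * ((1-s^2)^2 - t^2 + s * t^2) + cc * (1-s^2) * t^2
        = aa * d * s^3 + bb * s * d^2 + \<kappa>*t^2"
    by (simp add: \<kappa>_def d_def algebra_simps power2_eq_square)
  also have "\<dots> \<le> aa * d * s^3 + bb * s * d^2 + \<kappa>*d^2" using k0 tt by (simp add: mult_left_mono)
  also have "\<dots> = aa * d - d * (1-s) * \<beta>"
    by (simp add: \<beta>_def \<kappa>_def d_def algebra_simps power2_eq_square power3_eq_cube)
  also have "\<dots> \<le> aa * d" using d0 s beta by (simp add: \<beta>_def)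
  finally show ?thesis by (simp add: d_def)
qed

lemma final_ineq:
  fixes x y u :: complex and aa bb cc :: real
  assumes nx: "norm x \<le> 1" and ny: "norm y \<le> 1 - (norm x)^2"
    and sch: "norm (u * of_real (1 - (norm x)^2) + cnj x * y^2) \<le> (1 - (norm x)^2)^2 - (norm y)^2"
    and one: "norm x = 1 \<Longrightarrow> u = 0"
    and B: "0 \<le> bb" "bb \<le> 2 * cc" "0 \<le> aa"
    and beta: "\<And>s. 0 \<le> s \<Longrightarrow> s \<le> 1 \<Longrightarrow> aa * (1+s+s^2) - bb * s^2 * (1+s) - cc * (1-s) * (1+s)^2 \<ge> 0"
  shows "norm (- of_real aa * x^3 + of_real bb * x * u - of_real cc * y^2) \<le> aa"
proof (cases "norm x = 1")
  case True
  then have "norm y \<le> 0" using ny by simp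
  then have "y = 0" by simp
  then show ?thesis using one[OF True] True B by (simp add: norm_mult norm_power)
next
  case False
  define s where "s = norm x"
  define t where "t = norm y"
  define d where "d = 1 - s^2"
  have s: "0 \<le> s" "s < 1" using nx False by (auto simp: s_def)
  have d0: "d > 0" using s by (simp add: d_def abs_square_less_1)
  have t: "0 \<le> t" "t \<le> 1 - s^2" using ny by (auto simp: t_def s_def)
  define W where "W = u * of_real d + cnj x * y^2"
  have nW: "norm W \<le> d^2 - t^2" using sch by (simp add: W_def d_def s_def t_def)
  have ud: "norm (u * of_real d) \<le> d^2 - t^2 + s * t^2"
  proof -
    have "u * of_real d = W - cnj x * y^2" by (simp add: W_def)
    then have "norm (u * of_real d) \<le> norm W + norm (cnj x * y^2)" by (simp add: norm_triangle_ineq4)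
    also have "norm (cnj x * y^2) = s * t^2" by (simp add: norm_mult norm_power s_def t_def)
    finally show ?thesis using nW by simp
  qed
  define H where "H = - of_real aa * x^3 + of_real bb * x * u - of_real cc * y^2"
  have tri: "norm (p + q - r) \<le> norm p + norm q + norm r" for p q r :: complex
    using norm_triangle_ineq4[of "p + q" r] norm_triangle_ineq[of p q] by linarith
  have "of_real d * H = - (of_real (aa * d) * x^3) + of_real bb * x * (u * of_real d) - of_real (cc * d) * y^2"
    by (simp add: H_def algebra_simps)
  then have "norm (of_real d * H) \<le> norm (- (of_real (aa * d) * x^3)) + norm (of_real bb * x * (u * of_real d)) + norm (of_real (cc * d) * y^2)"
    using tri by presburger
  also have "\<dots> = aa * d * s^3 + bb * s * norm (u * of_real d) + cc * d * t^2"
    using B d0 by (simp add: norm_mult norm_power s_def t_def)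
  also have "\<dots> \<le> aa * d * s^3 + bb * s * (d^2 - t^2 + s * t^2) + cc * d * t^2"
    using B s ud by (simp add: mult_left_mono)
  also have "\<dots> \<le> aa * d"
    using real_core[OF s t B(1,2) beta[of s]] s by (simp add: d_def)
  finally have "d * norm H \<le> d * aa" using d0 by (simp add: norm_mult mult.commute)
  then show ?thesis using d0 by (simp add: H_def)
qed

lemma tcoeff_Suc0: "tcoeff f (Suc 0) = deriv f 0" by (simp add: tcoeff_def)

lemma omega_pkg:
  fixes \<omega> :: "complex \<Rightarrow> complex"
  assumes hol: "\<omega> holomorphic_on ball 0 1" and bd: "\<And>z. z \<in> ball 0 1 \<Longrightarrow> norm (\<omega> z) < 1"
    and z0: "\<omega> 0 = 0" and c1: "tcoeff \<omega> 1 = 0"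
  shows "norm (tcoeff \<omega> 2) \<le> 1" "norm (tcoeff \<omega> 3) \<le> 1 - (norm (tcoeff \<omega> 2))^2"
    "norm (tcoeff \<omega> 4 * of_real (1 - (norm (tcoeff \<omega> 2))^2) + cnj (tcoeff \<omega> 2) * (tcoeff \<omega> 3)^2)
       \<le> (1 - (norm (tcoeff \<omega> 2))^2)^2 - (norm (tcoeff \<omega> 3))^2"
    "norm (tcoeff \<omega> 2) = 1 \<Longrightarrow> tcoeff \<omega> 4 = 0"
proof -
  define K where "K = (\<lambda>z. if z = 0 then deriv \<omega> 0 else \<omega> z / z)"
  have bd': "\<And>z. z \<in> ball 0 1 \<Longrightarrow> norm (\<omega> z) \<le> 1" using bd less_imp_le by blast
  have holK: "K holomorphic_on ball 0 1" and tK: "\<And>n. tcoeff K n = tcoeff \<omega> (Suc n)"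
    and nK: "\<And>z. z \<in> ball 0 1 \<Longrightarrow> norm (K z) \<le> 1"
    using divz[OF hol z0] bd' unfolding K_def by auto
  have K0: "K 0 = 0" using c1 by (simp add: K_def flip: tcoeff_1)
  define h where "h = (\<lambda>z. if z = 0 then deriv K 0 else K z / z)"
  have holh: "h holomorphic_on ball 0 1" and th: "\<And>n. tcoeff h n = tcoeff K (Suc n)"
    and nh: "\<And>z. z \<in> ball 0 1 \<Longrightarrow> norm (h z) \<le> 1"
    using divz[OF holK K0] nK unfolding h_def by auto
  have th': "tcoeff h n = tcoeff \<omega> (Suc (Suc n))" for n by (simp add: th tK)
  have x: "tcoeff \<omega> 2 = h 0" using th'[of 0] by (simp add: tcoeff_0 numeral_2_eq_2)
  have y: "tcoeff \<omega> 3 = tcoeff h 1" using th'[of 1] by (simp add: numeral_3_eq_3)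
  have u: "tcoeff \<omega> 4 = tcoeff h 2" using th'[of 2] by (simp add: eval_nat_numeral)
  have y': "tcoeff \<omega> 3 = deriv h 0" using y by (simp add: tcoeff_1 tcoeff_Suc0)
  show "norm (tcoeff \<omega> 2) \<le> 1" using nh[of 0] x by simp
  show "norm (tcoeff \<omega> 3) \<le> 1 - (norm (tcoeff \<omega> 2))^2" using pick1[OF holh nh] x y' by simp
  show "norm (tcoeff \<omega> 4 * of_real (1 - (norm (tcoeff \<omega> 2))^2) + cnj (tcoeff \<omega> 2) * (tcoeff \<omega> 3)^2)
       \<le> (1 - (norm (tcoeff \<omega> 2))^2)^2 - (norm (tcoeff \<omega> 3))^2"
    using schur2[OF holh nh] x y u by (simp add: tcoeff_0)
  show "tcoeff \<omega> 4 = 0" if "norm (tcoeff \<omega> 2) = 1"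
    using maxmod_coeff[OF holh nh, of 1] that x u by (simp add: numeral_2_eq_2)
qed

lemma class_core:
  fixes \<omega> :: "complex \<Rightarrow> complex" and aa bb cc :: real
  assumes hol: "\<omega> holomorphic_on ball 0 1" and bd: "\<And>z. z \<in> ball 0 1 \<Longrightarrow> norm (\<omega> z) < 1"
    and z0: "\<omega> 0 = 0" and c1: "tcoeff \<omega> 1 = 0"
    and B: "0 \<le> bb" "bb \<le> 2 * cc" "0 \<le> aa"
    and beta: "\<And>s. 0 \<le> s \<Longrightarrow> s \<le> 1 \<Longrightarrow> aa * (1+s+s^2) - bb * s^2 * (1+s) - cc * (1-s) * (1+s)^2 \<ge> 0"
    and H: "H = - of_real aa * (tcoeff \<omega> 2)^3 + of_real bb * tcoeff \<omega> 2 * tcoeff \<omega> 4 - of_real cc * (tcoeff \<omega> 3)^2"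
  shows "norm H \<le> aa"
  unfolding H by (rule final_ineq[OF omega_pkg[OF hol bd z0 c1] B beta])

lemma hankel_formula:
  assumes na: "normalized_analytic f" and a2: "tcoeff f 2 = 0" and li: "local_inverse f g S"
  shows "hankel23 g = - 3 * (tcoeff f 3)^3 + tcoeff f 3 * tcoeff f 5 - (tcoeff f 4)^2"
proof -
  have holf: "f holomorphic_on ball 0 1" and f0: "f 0 = 0" and f1: "deriv f 0 = 1"
    using na by (auto simp: normalized_analytic_def)
  have S: "open S" "0 \<in> S" "g holomorphic_on S" "g 0 = 0" "\<And>w. w \<in> S \<Longrightarrow> f (g w) = w"
    using li by (auto simp: local_inverse_def)
  define F where "F = fps_expansion f 0"
  define G where "G = fps_expansion g 0"
  have EF: "f has_fps_expansion F" unfolding F_def by (rule hol_fps[OF holf]) simp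
  have EG: "g has_fps_expansion G" unfolding G_def by (rule has_fps_expansion_fps_expansion[OF S(1,2,3)])
  have G0: "G $ 0 = 0" using S(4) by (simp add: G_def fps_expansion_def)
  have Ec: "(f \<circ> g) has_fps_expansion (F oo G)" by (rule has_fps_expansion_compose[OF EF EG G0])
  have ev: "eventually (\<lambda>z. (f \<circ> g) z = z) (nhds 0)"
    using eventually_nhds_in_open[OF S(1,2)] by (auto elim!: eventually_mono simp: S(5))
  have FG: "F oo G = fps_X"
    by (rule fps_expansion_eq[OF Ec has_fps_expansion_fps_X ev])
  have F0: "F $ 0 = 0" "F $ 1 = 1" "F $ 2 = 0"
    using f0 f1 a2 by (simp_all add: F_def fps_expansion_def tcoeff_fps)
  note cc = compose_coeffs[OF FG G0 F0]
  have "hankel23 g = G $ 3 * G $ 5 - (G $ 4)^2" by (simp add: hankel23_def G_def tcoeff_fps)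
  also have "\<dots> = - 3 * (F $ 3)^3 + F $ 3 * F $ 5 - (F $ 4)^2"
    unfolding cc by (simp add: algebra_simps power2_eq_square power3_eq_cube)
  finally show ?thesis by (simp add: F_def tcoeff_fps)
qed

lemma re_pos_mob:
  fixes p :: complex
  assumes "Re p > 0"
  shows "p + 1 \<noteq> 0" "norm ((p - 1) / (p + 1)) < 1"
proof -
  have id: "(cmod (p + 1))^2 - (cmod (p - 1))^2 = 4 * Re p"
    unfolding cmod_power2 by (simp add: algebra_simps power2_eq_square)
  then have lt: "(cmod (p - 1))^2 < (cmod (p + 1))^2" using assms by linarith
  then show nz: "p + 1 \<noteq> 0" by auto
  have "cmod (p - 1) < cmod (p + 1)" using lt by (simp add: power_less_imp_less_base)
  then show "norm ((p - 1) / (p + 1)) < 1" using nz by (simp add: norm_divide divide_less_eq_1)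
qed

lemma cube_le_sq: "0 \<le> s \<Longrightarrow> s \<le> 1 \<Longrightarrow> (s::real)^3 \<le> s^2"
  by (simp add: power_decreasing)

lemma beta_a: "0 \<le> s \<Longrightarrow> s \<le> 1 \<Longrightarrow>
   (28/45) * (1+s+s^2) - (4/15) * s^2 * (1+s) - (1/4) * (1-s) * (1+s)^2 \<ge> (0::real)"
proof -
  assume s: "0 \<le> s" "s \<le> 1"
  have "(28/45) * (1+s+s^2) - (4/15) * s^2 * (1+s) - (1/4) * (1-s) * (1+s)^2
      = (67 + 67 * s + 109 * s^2 - 3 * s^3) / (180::real)"
    by (simp add: field_simps power2_eq_square power3_eq_cube)
  also have "\<dots> \<ge> 0" using cube_le_sq[OF s] s zero_le_power2[of s] by (intro divide_nonneg_pos) linarith+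
  finally show ?thesis .
qed

lemma beta_b: "0 \<le> s \<Longrightarrow> s \<le> 1 \<Longrightarrow>
   (2/45) * (1+s+s^2) - (1/30) * s^2 * (1+s) - (1/36) * (1-s) * (1+s)^2 \<ge> (0::real)"
proof -
  assume s: "0 \<le> s" "s \<le> 1"
  have "(2/45) * (1+s+s^2) - (1/30) * s^2 * (1+s) - (1/36) * (1-s) * (1+s)^2
      = (3 + 3 * s + 7 * s^2 - s^3) / (180::real)"
    by (simp add: field_simps power2_eq_square power3_eq_cube)
  also have "\<dots> \<ge> 0" using cube_le_sq[OF s] s zero_le_power2[of s] by (intro divide_nonneg_pos) linarith+
  finally show ?thesis .
qed

lemma beta_c: "0 \<le> s \<Longrightarrow> s \<le> 1 \<Longrightarrow>
   2 * (1+s+s^2) - (1/2) * s^2 * (1+s) - (4/9) * (1-s) * (1+s)^2 \<ge> (0::real)"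
proof -
  assume s: "0 \<le> s" "s \<le> 1"
  have "2 * (1+s+s^2) - (1/2) * s^2 * (1+s) - (4/9) * (1-s) * (1+s)^2
      = (28 + 28 * s + 35 * s^2 - s^3) / (18::real)"
    by (simp add: field_simps power2_eq_square power3_eq_cube)
  also have "\<dots> \<ge> 0" using cube_le_sq[OF s] s zero_le_power2[of s] by (intro divide_nonneg_pos) linarith+
  finally show ?thesis .
qed

lemma beta_d: "0 \<le> s \<Longrightarrow> s \<le> 1 \<Longrightarrow>
   2 * (1+s+s^2) - (1/2) * s^2 * (1+s) - (1/4) * (1-s) * (1+s)^2 \<ge> (0::real)"
proof -
  assume s: "0 \<le> s" "s \<le> 1"
  have "2 * (1+s+s^2) - (1/2) * s^2 * (1+s) - (1/4) * (1-s) * (1+s)^2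
      = (7 + 7 * s + 7 * s^2 - s^3) / (4::real)"
    by (simp add: field_simps power2_eq_square power3_eq_cube)
  also have "\<dots> \<ge> 0" using cube_le_sq[OF s] s zero_le_power2[of s] by (intro divide_nonneg_pos) linarith+
  finally show ?thesis .
qed

lemma bound_a:
  assumes bt: "bounded_turning f" and a2: "tcoeff f 2 = 0"
  shows "norm (- 3 * (tcoeff f 3)^3 + tcoeff f 3 * tcoeff f 5 - (tcoeff f 4)^2) \<le> 28/45"
proof -
  have holf: "f holomorphic_on ball 0 1" and f0: "f 0 = 0" and f1: "deriv f 0 = 1"
    and re: "\<And>z. z \<in> ball 0 1 \<Longrightarrow> Re (deriv f z) > 0"
    using bt by (auto simp: bounded_turning_def normalized_analytic_def)
  define p where "p = deriv f"
  have holp: "p holomorphic_on ball 0 1" unfolding p_def by (rule holomorphic_deriv[OF holf open_ball])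
  define \<omega> where "\<omega> = (\<lambda>z. (p z - 1) / (p z + 1))"
  have nz: "p z + 1 \<noteq> 0" if "z \<in> ball 0 1" for z using re_pos_mob(1) re[OF that] by (simp add: p_def)
  have hol\<omega>: "\<omega> holomorphic_on ball 0 1" unfolding \<omega>_def using holp nz by (intro holomorphic_intros) auto
  have bd: "norm (\<omega> z) < 1" if "z \<in> ball 0 1" for z
    using re_pos_mob(2) re[OF that] by (simp add: \<omega>_def p_def)
  have \<omega>0: "\<omega> 0 = 0" by (simp add: \<omega>_def p_def f1)
  define F where "F = fps_expansion f 0"
  define \<Omega> where "\<Omega> = fps_expansion \<omega> 0"
  have EF: "f has_fps_expansion F" unfolding F_def by (rule hol_fps[OF holf]) simp
  have E\<Omega>: "\<omega> has_fps_expansion \<Omega>" unfolding \<Omega>_def by (rule hol_fps[OF hol\<omega>]) simp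
  have E1: "(\<lambda>z. p z + 1) has_fps_expansion fps_deriv F + 1"
    unfolding p_def by (intro fps_expansion_intros EF)
  have E2: "(\<lambda>z. p z - 1) has_fps_expansion fps_deriv F - 1"
    unfolding p_def by (intro fps_expansion_intros EF)
  have id: "\<Omega> * (fps_deriv F + 1) = fps_deriv F - 1"
  proof (rule fps_mult_ident[OF E\<Omega> E1 E2], rule ev_ball[of 1])
    fix z :: complex assume "z \<in> ball 0 1"
    then have "p z + 1 \<noteq> 0" by (rule nz)
    then show "\<omega> z * (p z + 1) = p z - 1" by (simp add: \<omega>_def)
  qed simp
  have c: "\<Omega> $ 0 = 0" "F $ 1 = 1" "F $ 2 = 0"
    using \<omega>0 f1 a2 by (simp_all add: \<Omega>_def F_def fps_expansion_def tcoeff_fps)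
  define D where "D = fps_deriv F"
  have Dn: "D $ 0 = 1" "D $ 1 = 0" "D $ 2 = 3 * F $ 3" "D $ 3 = 4 * F $ 4" "D $ 4 = 5 * F $ 5"
    using c by (simp_all add: D_def eval_nat_numeral)
  have k: "(\<Omega> * (D + 1)) $ n = (D - 1) $ n" for n unfolding D_def by (simp only: id)
  have e1: "\<Omega> $ 1 = 0" using k[of 1] c Dn by (simp add: fps_mult_nth set05)
  have e2: "2 * \<Omega> $ 2 = 3 * F $ 3" using k[of 2] c Dn e1 by (simp add: fps_mult_nth set05 algebra_simps)
  have e3: "2 * \<Omega> $ 3 = 4 * F $ 4" using k[of 3] c Dn e1 by (simp add: fps_mult_nth set05 algebra_simps)
  have e4: "\<Omega> $ 2 * (3 * F $ 3) + 2 * \<Omega> $ 4 = 5 * F $ 5"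
    using k[of 4] c Dn e1 by (simp add: fps_mult_nth set05 algebra_simps)
  define x where "x = \<Omega> $ 2"
  define y where "y = \<Omega> $ 3"
  define u where "u = \<Omega> $ 4"
  have a3: "F $ 3 = 2/3 * x" using e2 by (simp add: x_def field_simps)
  have a4: "F $ 4 = y / 2" using e3 by (simp add: y_def field_simps)
  have a5: "F $ 5 = (2 * x^2 + 2 * u) / 5" using e4 a3 by (simp add: x_def u_def field_simps power2_eq_square)
  have H: "- 3 * (tcoeff f 3)^3 + tcoeff f 3 * tcoeff f 5 - (tcoeff f 4)^2
     = - of_real (28/45) * (tcoeff \<omega> 2)^3 + of_real (4/15) * tcoeff \<omega> 2 * tcoeff \<omega> 4 - of_real (1/4) * (tcoeff \<omega> 3)^2"
    unfolding tcoeff_fps F_def[symmetric] \<Omega>_def[symmetric] x_def[symmetric] y_def[symmetric] u_def[symmetric] a3 a4 a5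
    by (simp add: field_simps power2_eq_square power3_eq_cube)
  show ?thesis
    by (rule class_core[OF hol\<omega> bd \<omega>0 _ _ _ _ beta_a H])
       (use e1 in \<open>simp_all add: tcoeff_fps \<Omega>_def\<close>)
qed

lemma bound_b:
  assumes cv: "convex_fun f" and a2: "tcoeff f 2 = 0"
  shows "norm (- 3 * (tcoeff f 3)^3 + tcoeff f 3 * tcoeff f 5 - (tcoeff f 4)^2) \<le> 2/45"
proof -
  have holf: "f holomorphic_on ball 0 1" and f0: "f 0 = 0" and f1: "deriv f 0 = 1"
    and nz1: "\<And>z. z \<in> ball 0 1 \<Longrightarrow> deriv f z \<noteq> 0"
    and re: "\<And>z. z \<in> ball 0 1 \<Longrightarrow> Re (1 + z * deriv (deriv f) z / deriv f z) > 0"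
    using cv by (auto simp: convex_fun_def normalized_analytic_def)
  define p1 where "p1 = deriv f"
  define p2 where "p2 = deriv p1"
  have holp1: "p1 holomorphic_on ball 0 1" unfolding p1_def by (rule holomorphic_deriv[OF holf open_ball])
  have holp2: "p2 holomorphic_on ball 0 1" unfolding p2_def by (rule holomorphic_deriv[OF holp1 open_ball])
  define \<omega> where "\<omega> = (\<lambda>z. z * p2 z / (2 * p1 z + z * p2 z))"
  have rep: "2 * p1 z + z * p2 z = p1 z * ((1 + z * p2 z / p1 z) + 1)" and
    omp: "\<omega> z = ((1 + z * p2 z / p1 z) - 1) / ((1 + z * p2 z / p1 z) + 1)"
    if "z \<in> ball 0 1" for z
    using nz1[OF that] by (simp_all add: \<omega>_def p1_def field_simps)
  have nz: "2 * p1 z + z * p2 z \<noteq> 0" if "z \<in> ball 0 1" for z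
    using rep[OF that] nz1[OF that] re_pos_mob(1)[OF re[OF that]] by (simp add: p1_def p2_def)
  have hol\<omega>: "\<omega> holomorphic_on ball 0 1" unfolding \<omega>_def using holp1 holp2 nz
    by (intro holomorphic_intros) auto
  have bd: "norm (\<omega> z) < 1" if "z \<in> ball 0 1" for z
    using re_pos_mob(2)[OF re[OF that]] omp[OF that] by (simp add: p1_def p2_def)
  have \<omega>0: "\<omega> 0 = 0" by (simp add: \<omega>_def)
  define F where "F = fps_expansion f 0"
  define \<Omega> where "\<Omega> = fps_expansion \<omega> 0"
  define D where "D = fps_deriv F"
  define D2 where "D2 = fps_deriv D"
  have EF: "f has_fps_expansion F" unfolding F_def by (rule hol_fps[OF holf]) simp
  have E\<Omega>: "\<omega> has_fps_expansion \<Omega>" unfolding \<Omega>_def by (rule hol_fps[OF hol\<omega>]) simp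
  have ED: "p1 has_fps_expansion D" unfolding D_def p1_def by (intro fps_expansion_intros EF)
  have ED2: "p2 has_fps_expansion D2" unfolding D2_def p2_def by (intro fps_expansion_intros ED)
  have E1: "(\<lambda>z. 2 * p1 z + z * p2 z) has_fps_expansion fps_const 2 * D + fps_X * D2"
    by (intro fps_expansion_intros ED ED2)
  have E2: "(\<lambda>z. z * p2 z) has_fps_expansion fps_X * D2"
    by (intro fps_expansion_intros ED2)
  have id: "\<Omega> * (fps_const 2 * D + fps_X * D2) = fps_X * D2"
  proof (rule fps_mult_ident[OF E\<Omega> E1 E2], rule ev_ball[of 1])
    fix z :: complex assume "z \<in> ball 0 1"
    then have "2 * p1 z + z * p2 z \<noteq> 0" by (rule nz)
    then show "\<omega> z * (2 * p1 z + z * p2 z) = z * p2 z" by (simp add: \<omega>_def)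
  qed simp
  have c: "\<Omega> $ 0 = 0" "F $ 1 = 1" "F $ 2 = 0"
    using \<omega>0 f1 a2 by (simp_all add: \<Omega>_def F_def fps_expansion_def tcoeff_fps)
  have Dn: "D $ 0 = 1" "D $ 1 = 0" "D $ 2 = 3 * F $ 3" "D $ 3 = 4 * F $ 4" "D $ 4 = 5 * F $ 5"
    using c by (simp_all add: D_def eval_nat_numeral)
  have D2n: "D2 $ 0 = 0" "D2 $ 1 = 6 * F $ 3" "D2 $ 2 = 12 * F $ 4" "D2 $ 3 = 20 * F $ 5"
    using Dn by (simp_all add: D2_def eval_nat_numeral)
  define Q where "Q = fps_X * D2"
  have Qn: "Q $ 0 = 0" "Q $ 1 = 0" "Q $ 2 = 6 * F $ 3" "Q $ 3 = 12 * F $ 4" "Q $ 4 = 20 * F $ 5"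
    using D2n by (simp_all add: Q_def fps_X_mult_nth eval_nat_numeral)
  have k: "(\<Omega> * (fps_const 2 * D + Q)) $ n = Q $ n" for n unfolding Q_def by (simp only: id)
  have e1: "\<Omega> $ 1 = 0" using k[of 1] c Dn Qn by (simp add: fps_mult_nth set05)
  have e2: "2 * \<Omega> $ 2 = 6 * F $ 3" using k[of 2] c Dn Qn e1 by (simp add: fps_mult_nth set05 algebra_simps)
  have e3: "2 * \<Omega> $ 3 = 12 * F $ 4" using k[of 3] c Dn Qn e1 by (simp add: fps_mult_nth set05 algebra_simps)
  have e4: "\<Omega> $ 2 * (12 * F $ 3) + 2 * \<Omega> $ 4 = 20 * F $ 5"
    using k[of 4] c Dn Qn e1 by (simp add: fps_mult_nth set05 algebra_simps)
  define x where "x = \<Omega> $ 2"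
  define y where "y = \<Omega> $ 3"
  define u where "u = \<Omega> $ 4"
  have a3: "F $ 3 = x / 3" using e2 by (simp add: x_def field_simps)
  have a4: "F $ 4 = y / 6" using e3 by (simp add: y_def field_simps)
  have a5': "20 * F $ 5 = 2 * u + 4 * x^2" using e4 a3
    by (simp add: x_def u_def algebra_simps power2_eq_square)
  have a5: "F $ 5 = u / 10 + x^2 / 5"
  proof -
    have "F $ 5 = (20 * F $ 5) / 20" by simp
    also have "\<dots> = u / 10 + x^2 / 5" unfolding a5' by (simp add: field_simps)
    finally show ?thesis .
  qed
  have H: "- 3 * (tcoeff f 3)^3 + tcoeff f 3 * tcoeff f 5 - (tcoeff f 4)^2
     = - of_real (2/45) * (tcoeff \<omega> 2)^3 + of_real (1/30) * tcoeff \<omega> 2 * tcoeff \<omega> 4 - of_real (1/36) * (tcoeff \<omega> 3)^2"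
    unfolding tcoeff_fps F_def[symmetric] \<Omega>_def[symmetric] x_def[symmetric] y_def[symmetric] u_def[symmetric] a3 a4 a5
    by (simp add: field_simps power2_eq_square power3_eq_cube)
  show ?thesis
    by (rule class_core[OF hol\<omega> bd \<omega>0 _ _ _ _ beta_b H])
       (use e1 in \<open>simp_all add: tcoeff_fps \<Omega>_def\<close>)
qed

lemma bound_c:
  assumes st: "starlike_fun f" and a2: "tcoeff f 2 = 0"
  shows "norm (- 3 * (tcoeff f 3)^3 + tcoeff f 3 * tcoeff f 5 - (tcoeff f 4)^2) \<le> 2"
proof -
  have holf: "f holomorphic_on ball 0 1" and f0: "f 0 = 0" and f1: "deriv f 0 = 1"
    and fnz: "\<And>z. z \<in> ball 0 1 \<Longrightarrow> z \<noteq> 0 \<Longrightarrow> f z \<noteq> 0"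
    and re: "\<And>z. z \<in> ball 0 1 \<Longrightarrow> z \<noteq> 0 \<Longrightarrow> Re (z * deriv f z / f z) > 0"
    using st by (auto simp: starlike_fun_def normalized_analytic_def)
  define \<psi> where "\<psi> = (\<lambda>z. if z = 0 then deriv f 0 else f z / z)"
  have hol\<psi>: "\<psi> holomorphic_on ball 0 1" and fe: "\<And>z. f z = z * \<psi> z"
    and t\<psi>: "\<And>n. tcoeff \<psi> n = tcoeff f (Suc n)"
    using divz[OF holf f0] unfolding \<psi>_def by auto
  have \<psi>0: "\<psi> 0 = 1" by (simp add: \<psi>_def f1)
  have \<psi>nz: "\<psi> z \<noteq> 0" if "z \<in> ball 0 1" for z
    using fnz[OF that] \<psi>0 fe[of z] by (cases "z = 0") auto
  define q where "q = deriv \<psi>"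
  have holq: "q holomorphic_on ball 0 1" unfolding q_def by (rule holomorphic_deriv[OF hol\<psi> open_ball])
  have df: "deriv f z = \<psi> z + z * q z" if "z \<in> ball 0 1" for z
  proof -
    have "f = (\<lambda>z. z * \<psi> z)" using fe by (simp add: fun_eq_iff)
    moreover have "\<psi> field_differentiable at z"
      using hol\<psi> that by (meson holomorphic_on_imp_differentiable_at open_ball)
    ultimately show ?thesis by (simp add: q_def deriv_mult)
  qed
  define \<omega> where "\<omega> = (\<lambda>z. z * q z / (2 * \<psi> z + z * q z))"
  have nz: "2 * \<psi> z + z * q z \<noteq> 0" and bd: "norm (\<omega> z) < 1" if z: "z \<in> ball 0 1" for z
  proof -
    have "(2 * \<psi> z + z * q z \<noteq> 0) \<and> norm (\<omega> z) < 1"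
    proof (cases "z = 0")
      case True then show ?thesis by (simp add: \<omega>_def \<psi>0)
    next
      case False
      define p where "p = z * deriv f z / f z"
      have pe: "p = 1 + z * q z / \<psi> z" using False \<psi>nz[OF z]
        by (simp add: p_def df[OF z] fe[of z] field_simps)
      have "2 * \<psi> z + z * q z = \<psi> z * (p + 1)" using \<psi>nz[OF z] by (simp add: pe field_simps)
      moreover have "\<omega> z = (p - 1) / (p + 1)" using \<psi>nz[OF z] by (simp add: \<omega>_def pe field_simps)
      ultimately show ?thesis using re_pos_mob[OF re[OF z False, folded p_def]] \<psi>nz[OF z] by simp
    qed
    then show "2 * \<psi> z + z * q z \<noteq> 0" "norm (\<omega> z) < 1" by auto
  qed
  have hol\<omega>: "\<omega> holomorphic_on ball 0 1" unfolding \<omega>_def using hol\<psi> holq nz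
    by (intro holomorphic_intros) auto
  have \<omega>0: "\<omega> 0 = 0" by (simp add: \<omega>_def)
  define \<Psi> where "\<Psi> = fps_expansion \<psi> 0"
  define \<Omega> where "\<Omega> = fps_expansion \<omega> 0"
  define D where "D = fps_deriv \<Psi>"
  have E\<Psi>: "\<psi> has_fps_expansion \<Psi>" unfolding \<Psi>_def by (rule hol_fps[OF hol\<psi>]) simp
  have E\<Omega>: "\<omega> has_fps_expansion \<Omega>" unfolding \<Omega>_def by (rule hol_fps[OF hol\<omega>]) simp
  have ED: "q has_fps_expansion D" unfolding D_def q_def by (intro fps_expansion_intros E\<Psi>)
  have E1: "(\<lambda>z. 2 * \<psi> z + z * q z) has_fps_expansion fps_const 2 * \<Psi> + fps_X * D"
    by (intro fps_expansion_intros E\<Psi> ED)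
  have E2: "(\<lambda>z. z * q z) has_fps_expansion fps_X * D"
    by (intro fps_expansion_intros ED)
  have id: "\<Omega> * (fps_const 2 * \<Psi> + fps_X * D) = fps_X * D"
  proof (rule fps_mult_ident[OF E\<Omega> E1 E2], rule ev_ball[of 1])
    fix z :: complex assume "z \<in> ball 0 1"
    then have "2 * \<psi> z + z * q z \<noteq> 0" by (rule nz)
    then show "\<omega> z * (2 * \<psi> z + z * q z) = z * q z" by (simp add: \<omega>_def)
  qed simp
  have tP: "\<Psi> $ n = tcoeff f (Suc n)" for n by (simp add: \<Psi>_def flip: tcoeff_fps t\<psi>)
  have c: "\<Omega> $ 0 = 0" "\<Psi> $ 0 = 1" "\<Psi> $ 1 = 0"
    using \<omega>0 f1 a2 tP[of 0] tP[of 1] by (simp_all add: \<Omega>_def fps_expansion_def tcoeff_1 numeral_2_eq_2 tcoeff_Suc0)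
  have Pn: "\<Psi> $ 2 = tcoeff f 3" "\<Psi> $ 3 = tcoeff f 4" "\<Psi> $ 4 = tcoeff f 5"
    using tP[of 2] tP[of 3] tP[of 4] by (simp_all add: eval_nat_numeral)
  have Dn: "D $ 0 = 0" "D $ 1 = 2 * \<Psi> $ 2" "D $ 2 = 3 * \<Psi> $ 3" "D $ 3 = 4 * \<Psi> $ 4"
    using c by (simp_all add: D_def eval_nat_numeral)
  define Q where "Q = fps_X * D"
  have Qn: "Q $ 0 = 0" "Q $ 1 = 0" "Q $ 2 = 2 * \<Psi> $ 2" "Q $ 3 = 3 * \<Psi> $ 3" "Q $ 4 = 4 * \<Psi> $ 4"
    using Dn by (simp_all add: Q_def fps_X_mult_nth eval_nat_numeral)
  have k: "(\<Omega> * (fps_const 2 * \<Psi> + Q)) $ n = Q $ n" for n unfolding Q_def by (simp only: id)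
  have e1: "\<Omega> $ 1 = 0" using k[of 1] c Qn by (simp add: fps_mult_nth set05)
  have e2: "2 * \<Omega> $ 2 = 2 * \<Psi> $ 2" using k[of 2] c Qn e1 by (simp add: fps_mult_nth set05 algebra_simps)
  have e3: "2 * \<Omega> $ 3 = 3 * \<Psi> $ 3" using k[of 3] c Qn e1 by (simp add: fps_mult_nth set05 algebra_simps)
  have e4: "\<Omega> $ 2 * (4 * \<Psi> $ 2) + 2 * \<Omega> $ 4 = 4 * \<Psi> $ 4"
    using k[of 4] c Qn e1 by (simp add: fps_mult_nth set05 algebra_simps)
  define x where "x = \<Omega> $ 2"
  define y where "y = \<Omega> $ 3"
  define u where "u = \<Omega> $ 4"
  have a3: "\<Psi> $ 2 = x" using e2 by (simp add: x_def)
  have a4: "\<Psi> $ 3 = 2 * y / 3" using e3 by (simp add: y_def field_simps)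
  have a5': "4 * \<Psi> $ 4 = 2 * u + 4 * x^2" using e4 a3
    by (simp add: x_def u_def algebra_simps power2_eq_square)
  have a5: "\<Psi> $ 4 = u / 2 + x^2"
  proof -
    have "\<Psi> $ 4 = (4 * \<Psi> $ 4) / 4" by simp
    also have "\<dots> = u / 2 + x^2" unfolding a5' by (simp add: field_simps)
    finally show ?thesis .
  qed
  have H: "- 3 * (tcoeff f 3)^3 + tcoeff f 3 * tcoeff f 5 - (tcoeff f 4)^2
     = - of_real 2 * (tcoeff \<omega> 2)^3 + of_real (1/2) * tcoeff \<omega> 2 * tcoeff \<omega> 4 - of_real (4/9) * (tcoeff \<omega> 3)^2"
    unfolding Pn[symmetric] a3 a4 a5 unfolding tcoeff_fps \<Omega>_def[symmetric] x_def[symmetric] y_def[symmetric] u_def[symmetric]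
    by (simp add: field_simps power2_eq_square power3_eq_cube)
  show ?thesis
    by (rule class_core[OF hol\<omega> bd \<omega>0 _ _ _ _ beta_c H])
       (use e1 in \<open>simp_all add: tcoeff_fps \<Omega>_def\<close>)
qed

lemma bound_d:
  assumes st: "starlike_sym f" and a2: "tcoeff f 2 = 0"
  shows "norm (- 3 * (tcoeff f 3)^3 + tcoeff f 3 * tcoeff f 5 - (tcoeff f 4)^2) \<le> 2"
proof -
  have holf: "f holomorphic_on ball 0 1" and f0: "f 0 = 0" and f1: "deriv f 0 = 1"
    and fnz: "\<And>z. z \<in> ball 0 1 \<Longrightarrow> z \<noteq> 0 \<Longrightarrow> f z - f (-z) \<noteq> 0"
    and re: "\<And>z. z \<in> ball 0 1 \<Longrightarrow> z \<noteq> 0 \<Longrightarrow> Re (2 * z * deriv f z / (f z - f (-z))) > 0"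
    using st by (auto simp: starlike_sym_def normalized_analytic_def)
  have holm: "(f \<circ> uminus) holomorphic_on ball 0 1"
    by (rule holomorphic_on_compose_gen[OF _ holf]) (auto intro: holomorphic_intros)
  define \<phi> where "\<phi> = (\<lambda>z. 1/2 * (f z - (f \<circ> uminus) z))"
  have hol\<phi>: "\<phi> holomorphic_on ball 0 1" unfolding \<phi>_def using holf holm by (intro holomorphic_intros)
  have \<phi>0: "\<phi> 0 = 0" by (simp add: \<phi>_def f0)
  define G where "G = (\<lambda>z. if z = 0 then deriv \<phi> 0 else \<phi> z / z)"
  have holG: "G holomorphic_on ball 0 1" and fe: "\<And>z. \<phi> z = z * G z"
    and tG: "\<And>n. tcoeff G n = tcoeff \<phi> (Suc n)"
    using divz[OF hol\<phi> \<phi>0] unfolding G_def by auto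
  define F where "F = fps_expansion f 0"
  have EF: "f has_fps_expansion F" unfolding F_def by (rule hol_fps[OF holf]) simp
  have Em: "(f \<circ> uminus) has_fps_expansion (F oo (- fps_X))"
    by (rule has_fps_expansion_compose[OF EF]) (auto intro!: fps_expansion_intros)
  have E\<phi>: "\<phi> has_fps_expansion fps_const (1/2) * (F - (F oo (- fps_X)))"
    unfolding \<phi>_def by (intro fps_expansion_intros EF Em)
  have t\<phi>: "tcoeff \<phi> n = 1/2 * (F $ n - (-1)^n * F $ n)" for n
    using tcoeff_eq_nth[OF E\<phi>, of n] by (simp add: fps_compose_uminus')
  have c: "F $ 1 = 1" "F $ 2 = 0"
    using f1 a2 by (simp_all add: F_def fps_expansion_def tcoeff_fps)
  have Gn: "tcoeff G 0 = 1" "tcoeff G 1 = 0" "tcoeff G 2 = F $ 3" "tcoeff G 3 = 0" "tcoeff G 4 = F $ 5"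
    using c by (simp_all add: tG t\<phi> eval_nat_numeral)
  have G0: "G 0 = 1" using Gn(1) by (simp add: tcoeff_0)
  have Gnz: "G z \<noteq> 0" if "z \<in> ball 0 1" for z
  proof (cases "z = 0")
    case True then show ?thesis using G0 by simp
  next
    case False
    then have "\<phi> z \<noteq> 0" using fnz[OF that False] by (simp add: \<phi>_def)
    then show ?thesis using fe[of z] by auto
  qed
  define p1 where "p1 = deriv f"
  have holp1: "p1 holomorphic_on ball 0 1" unfolding p1_def by (rule holomorphic_deriv[OF holf open_ball])
  define \<omega> where "\<omega> = (\<lambda>z. (p1 z - G z) / (p1 z + G z))"
  have nz: "p1 z + G z \<noteq> 0" and bd: "norm (\<omega> z) < 1" if z: "z \<in> ball 0 1" for z
  proof -
    have "(p1 z + G z \<noteq> 0) \<and> norm (\<omega> z) < 1"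
    proof (cases "z = 0")
      case True then show ?thesis by (simp add: \<omega>_def G0 p1_def f1)
    next
      case False
      define p where "p = 2 * z * deriv f z / (f z - f (-z))"
      have ff: "f z - f (-z) = 2 * z * G z" using fe[of z] by (simp add: \<phi>_def)
      have pe: "p = p1 z / G z" using False Gnz[OF z]
        by (simp add: p_def ff p1_def field_simps)
      have eq: "p1 z + G z = G z * (p + 1)" using Gnz[OF z] by (simp add: pe field_simps)
      have nzz: "p1 z + G z \<noteq> 0" unfolding eq using re_pos_mob(1)[OF re[OF z False, folded p_def]] Gnz[OF z] by simp
      have m1: "p - 1 = (p1 z - G z) / G z" and p1': "p + 1 = (p1 z + G z) / G z"
        using Gnz[OF z] by (simp_all add: pe field_simps)
      have "\<omega> z = (p - 1) / (p + 1)" unfolding m1 p1' using Gnz[OF z] by (simp add: \<omega>_def)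
      then show ?thesis using re_pos_mob(2)[OF re[OF z False, folded p_def]] nzz by simp
    qed
    then show "p1 z + G z \<noteq> 0" "norm (\<omega> z) < 1" by auto
  qed
  have hol\<omega>: "\<omega> holomorphic_on ball 0 1" unfolding \<omega>_def using holp1 holG nz
    by (intro holomorphic_intros) auto
  have \<omega>0: "\<omega> 0 = 0" by (simp add: \<omega>_def G0 p1_def f1)
  define \<Omega> where "\<Omega> = fps_expansion \<omega> 0"
  define Gf where "Gf = fps_expansion G 0"
  define D where "D = fps_deriv F"
  have E\<Omega>: "\<omega> has_fps_expansion \<Omega>" unfolding \<Omega>_def by (rule hol_fps[OF hol\<omega>]) simp
  have EG: "G has_fps_expansion Gf" unfolding Gf_def by (rule hol_fps[OF holG]) simp
  have ED: "p1 has_fps_expansion D" unfolding D_def p1_def by (intro fps_expansion_intros EF)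
  have E1: "(\<lambda>z. p1 z + G z) has_fps_expansion D + Gf" by (intro fps_expansion_intros ED EG)
  have E2: "(\<lambda>z. p1 z - G z) has_fps_expansion D - Gf" by (intro fps_expansion_intros ED EG)
  have id: "\<Omega> * (D + Gf) = D - Gf"
  proof (rule fps_mult_ident[OF E\<Omega> E1 E2], rule ev_ball[of 1])
    fix z :: complex assume "z \<in> ball 0 1"
    then have "p1 z + G z \<noteq> 0" by (rule nz)
    then show "\<omega> z * (p1 z + G z) = p1 z - G z" by (simp add: \<omega>_def)
  qed simp
  have Gfn: "Gf $ 0 = 1" "Gf $ 1 = 0" "Gf $ 2 = F $ 3" "Gf $ 3 = 0" "Gf $ 4 = F $ 5"
    using Gn by (simp_all add: Gf_def flip: tcoeff_fps)
  have Dn: "D $ 0 = 1" "D $ 1 = 0" "D $ 2 = 3 * F $ 3" "D $ 3 = 4 * F $ 4" "D $ 4 = 5 * F $ 5"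
    using c by (simp_all add: D_def eval_nat_numeral)
  have O0: "\<Omega> $ 0 = 0" using \<omega>0 by (simp add: \<Omega>_def fps_expansion_def)
  have k: "(\<Omega> * (D + Gf)) $ n = (D - Gf) $ n" for n by (simp only: id)
  have e1: "\<Omega> $ 1 = 0" using k[of 1] O0 Dn Gfn by (simp add: fps_mult_nth set05)
  have e2: "2 * \<Omega> $ 2 = 2 * F $ 3" using k[of 2] O0 Dn Gfn e1 by (simp add: fps_mult_nth set05 algebra_simps)
  have e3: "2 * \<Omega> $ 3 = 4 * F $ 4" using k[of 3] O0 Dn Gfn e1 by (simp add: fps_mult_nth set05 algebra_simps)
  have e4: "\<Omega> $ 2 * (4 * F $ 3) + 2 * \<Omega> $ 4 = 4 * F $ 5"
    using k[of 4] O0 Dn Gfn e1 by (simp add: fps_mult_nth set05 algebra_simps)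
  define x where "x = \<Omega> $ 2"
  define y where "y = \<Omega> $ 3"
  define u where "u = \<Omega> $ 4"
  have a3: "F $ 3 = x" using e2 by (simp add: x_def)
  have a4: "F $ 4 = y / 2" using e3 by (simp add: y_def field_simps)
  have a5': "4 * F $ 5 = 2 * u + 4 * x^2" using e4 a3
    by (simp add: x_def u_def algebra_simps power2_eq_square)
  have a5: "F $ 5 = u / 2 + x^2"
  proof -
    have "F $ 5 = (4 * F $ 5) / 4" by simp
    also have "\<dots> = u / 2 + x^2" unfolding a5' by (simp add: field_simps)
    finally show ?thesis .
  qed
  have H: "- 3 * (tcoeff f 3)^3 + tcoeff f 3 * tcoeff f 5 - (tcoeff f 4)^2
     = - of_real 2 * (tcoeff \<omega> 2)^3 + of_real (1/2) * tcoeff \<omega> 2 * tcoeff \<omega> 4 - of_real (1/4) * (tcoeff \<omega> 3)^2"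
    unfolding tcoeff_fps F_def[symmetric] \<Omega>_def[symmetric] x_def[symmetric] y_def[symmetric] u_def[symmetric] a3 a4 a5
    by (simp add: field_simps power2_eq_square power3_eq_cube)
  show ?thesis
    by (rule class_core[OF hol\<omega> bd \<omega>0 _ _ _ _ beta_d H])
       (use e1 in \<open>simp_all add: tcoeff_fps \<Omega>_def\<close>)
qed

lemma local_inv_exists:
  assumes hol: "f holomorphic_on ball 0 1" and f0: "f 0 = 0" and d: "deriv f 0 \<noteq> 0"
  shows "\<exists>g S. local_inverse f g S"
proof -
  have z: "0 \<in> ball (0::complex) 1" by simp
  have "\<exists>r. r > 0 \<and> ball (0::complex) r \<subseteq> ball 0 1 \<and> open (f ` ball 0 r) \<and> inj_on f (ball 0 r)"
    by (rule has_complex_derivative_locally_invertible[OF hol z open_ball d]) blast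
  then obtain r where r: "r > 0" "ball (0::complex) r \<subseteq> ball 0 1" "open (f ` ball 0 r)" "inj_on f (ball 0 r)"
    by (elim exE conjE)
  have hr: "f holomorphic_on ball 0 r" using hol r(2) by (rule holomorphic_on_subset)
  obtain g where g: "g holomorphic_on (f ` ball 0 r)" "\<And>z. z \<in> ball 0 r \<Longrightarrow> g (f z) = z"
    using holomorphic_has_inverse[OF hr open_ball r(4)] by metis
  have "local_inverse f g (f ` ball 0 r)"
    unfolding local_inverse_def
  proof (intro conjI ballI)
    show "open (f ` ball 0 r)" by (rule r(3))
    show "0 \<in> f ` ball 0 r" using r(1) f0 by (metis centre_in_ball image_eqI)
    show "g holomorphic_on f ` ball 0 r" by (rule g(1))
    show "g 0 = 0" using g(2)[of 0] r(1) f0 by simp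
    show "g ` f ` ball 0 r \<subseteq> ball 0 1" using g(2) r(2) by auto
    fix w assume "w \<in> f ` ball 0 r"
    then show "f (g w) = w" using g(2) by auto
  qed
  then show ?thesis by blast
qed

lemma re_cayley:
  fixes w :: complex
  assumes "norm w < 1"
  shows "Re ((1 + w) / (1 - w)) > 0"
proof -
  have w1: "w \<noteq> 1" using assms by auto
  have "(Re w)^2 + (Im w)^2 < 1" using assms by (simp add: cmod_def)
  then have n: "Re (1 + w) * Re (1 - w) + Im (1 + w) * Im (1 - w) > 0"
    by (simp add: algebra_simps power2_eq_square)
  have dd: "(cmod (1 - w))^2 > 0" using w1 by simp
  show ?thesis unfolding Re_divide' using divide_pos_pos[OF n dd] .
qed

lemma nz2: "z \<in> ball (0::complex) 1 \<Longrightarrow> 1 - z^2 \<noteq> 0"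
proof
  assume z: "z \<in> ball 0 1" and e: "1 - z^2 = 0"
  have "norm (z^2) < 1" using z by (simp add: norm_power power_less_one_iff abs_square_less_1)
  moreover have "z^2 = 1" using e by simp
  ultimately show False by simp
qed

lemma nzs: "z \<in> ball (0::complex) 1 \<Longrightarrow> norm (z^2) < 1"
  by (simp add: norm_power abs_square_less_1)

lemma fps_sq_ident:
  fixes F H :: "complex fps"
  assumes "(1 - fps_X^2) * F = H"
  shows "\<And>n. F $ n = H $ n + (if n < 2 then 0 else F $ (n - 2))"
proof -
  fix n
  have "F = H + fps_X^2 * F" using assms by (simp add: algebra_simps)
  then have "F $ n = (H + fps_X^2 * F) $ n" by simp
  then show "F $ n = H $ n + (if n < 2 then 0 else F $ (n - 2))"
    by (simp add: fps_X_power_mult_nth)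
qed

definition koebe2 :: "complex \<Rightarrow> complex" where "koebe2 z = z / (1 - z^2)"

lemma koebe2_props:
  shows "normalized_analytic koebe2" "starlike_fun koebe2" "starlike_sym koebe2"
    "tcoeff koebe2 2 = 0" "tcoeff koebe2 3 = 1" "tcoeff koebe2 4 = 0" "tcoeff koebe2 5 = 1"
proof -
  let ?f = koebe2
  have hol: "?f holomorphic_on ball 0 1" unfolding koebe2_def[abs_def] using nz2
    by (intro holomorphic_intros) auto
  have der: "(?f has_field_derivative (1 + z^2) / (1 - z^2)^2) (at z)" if "z \<in> ball 0 1" for z
    unfolding koebe2_def[abs_def] using nz2[OF that]
    by (auto intro!: derivative_eq_intros simp: field_simps power2_eq_square)
  have d: "deriv ?f z = (1 + z^2) / (1 - z^2)^2" if "z \<in> ball 0 1" for z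
    using DERIV_imp_deriv[OF der[OF that]] .
  have f0: "?f 0 = 0" by (simp add: koebe2_def)
  show na: "normalized_analytic ?f"
    unfolding normalized_analytic_def using hol f0 d[of 0] by simp
  have q: "z * deriv ?f z / ?f z = (1 + z^2) / (1 - z^2)" if "z \<in> ball 0 1" "z \<noteq> 0" for z
  proof -
    have gen: "z * (a / w^2) / (z / w) = a / w" if "z \<noteq> 0" "w \<noteq> 0" for a w :: complex
      using that by (simp add: field_simps power2_eq_square)
    show ?thesis using gen[OF that(2) nz2[OF that(1)]] by (simp add: d[OF that(1)] koebe2_def)
  qed
  have fnz: "?f z \<noteq> 0" if "z \<in> ball 0 1" "z \<noteq> 0" for z
    using that nz2[OF that(1)] by (simp add: koebe2_def)
  show "starlike_fun ?f"
    unfolding starlike_fun_def using na fnz q re_cayley[OF nzs] by auto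
  have odd: "?f (-z) = - ?f z" for z by (simp add: koebe2_def)
  show "starlike_sym ?f"
    unfolding starlike_sym_def
  proof (intro conjI ballI)
    show "normalized_analytic ?f" by (rule na)
    fix z :: complex assume z: "z \<in> ball 0 1 - {0}"
    then show "?f z - ?f (-z) \<noteq> 0" using fnz by (simp add: odd)
    have "2 * z * deriv ?f z / (?f z - ?f (- z)) = z * deriv ?f z / ?f z"
      using fnz z by (simp add: odd)
    then show "Re (2 * z * deriv ?f z / (?f z - ?f (- z))) > 0"
      using q z re_cayley[OF nzs, of z] by simp
  qed
  define F where "F = fps_expansion ?f 0"
  have EF: "?f has_fps_expansion F" unfolding F_def by (rule hol_fps[OF hol]) simp
  have E1: "(\<lambda>z. 1 - z^2) has_fps_expansion 1 - fps_X^2" by (intro fps_expansion_intros)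
  have id: "(1 - fps_X^2) * F = fps_X"
  proof (rule fps_mult_ident[OF E1 EF has_fps_expansion_fps_X], rule ev_ball[of 1])
    fix z :: complex assume "z \<in> ball 0 1"
    then show "(1 - z^2) * ?f z = z" using nz2 by (simp add: koebe2_def)
  qed simp
  note r = fps_sq_ident[OF id]
  have F0: "F $ 0 = 0" using f0 by (simp add: F_def fps_expansion_def)
  have F1: "F $ 1 = 1" using r[of 1] by simp
  have F2: "F $ 2 = 0" using r[of 2] F0 by simp
  have F3: "F $ 3 = 1" using r[of 3] F1 by simp
  have F4: "F $ 4 = 0" using r[of 4] F2 by simp
  have F5: "F $ 5 = 1" using r[of 5] F3 by simp
  show "tcoeff ?f 2 = 0" "tcoeff ?f 3 = 1" "tcoeff ?f 4 = 0" "tcoeff ?f 5 = 1"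
    using F2 F3 F4 F5 by (simp_all add: tcoeff_fps F_def)
qed

lemma not_nonpos: "z \<in> ball (0::complex) 1 \<Longrightarrow> 1 + z \<notin> \<real>\<^sub>\<le>\<^sub>0 \<and> 1 - z \<notin> \<real>\<^sub>\<le>\<^sub>0"
proof -
  assume z: "z \<in> ball 0 1"
  have "\<bar>Re z\<bar> \<le> norm z" by (rule abs_Re_le_cmod)
  then have "\<bar>Re z\<bar> < 1" using z by simp
  then show ?thesis by (auto simp: complex_nonpos_Reals_iff)
qed

lemma lnlog_der:
  assumes z: "z \<in> ball (0::complex) 1"
  shows "((\<lambda>z. Ln (1 + z) - Ln (1 - z)) has_field_derivative 2 / (1 - z^2)) (at z)"
proof -
  have a: "1 + z \<noteq> 0" "1 - z \<noteq> 0" using not_nonpos[OF z] by auto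
  have "((\<lambda>z. Ln (1 + z) - Ln (1 - z)) has_field_derivative inverse (1 + z) * (0 + 1) - inverse (1 - z) * (0 - 1)) (at z)"
    using not_nonpos[OF z] by (intro derivative_intros) auto
  moreover have "inverse (1 + z) * (0 + 1) - inverse (1 - z) * (0 - 1) = 2 / (1 - z^2)"
    using a by (simp add: field_simps power2_eq_square)
  ultimately show ?thesis by simp
qed

lemma lnlog_hol: "(\<lambda>z. Ln (1 + z) - Ln (1 - z)) holomorphic_on ball 0 1"
  using not_nonpos by (intro holomorphic_intros) auto

lemma deriv_coeffs_sq:
  fixes f :: "complex \<Rightarrow> complex"
  assumes hol: "f holomorphic_on ball 0 1" and f0: "f 0 = 0"
    and id: "\<And>z. z \<in> ball 0 1 \<Longrightarrow> (1 - z^2) * deriv f z = 1 + c * z^2"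
  shows "tcoeff f 2 = 0" "tcoeff f 3 = (1 + c) / 3" "tcoeff f 4 = 0" "tcoeff f 5 = (1 + c) / 5"
    "deriv f 0 = 1"
proof -
  define F where "F = fps_expansion f 0"
  have EF: "f has_fps_expansion F" unfolding F_def by (rule hol_fps[OF hol]) simp
  have ED: "deriv f has_fps_expansion fps_deriv F" by (intro fps_expansion_intros EF)
  have E1: "(\<lambda>z. 1 - z^2) has_fps_expansion 1 - fps_X^2" by (intro fps_expansion_intros)
  have E2: "(\<lambda>z. 1 + c * z^2) has_fps_expansion 1 + fps_const c * fps_X^2" by (intro fps_expansion_intros)
  have fid: "(1 - fps_X^2) * fps_deriv F = 1 + fps_const c * fps_X^2"
    by (rule fps_mult_ident[OF E1 ED E2], rule ev_ball[of 1]) (auto intro: id)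
  define D where "D = fps_deriv F"
  note r = fps_sq_ident[OF fid[folded D_def]]
  have D0: "D $ 0 = 1" using r[of 0] by simp
  have D1: "D $ 1 = 0" using r[of 1] by simp
  have D2: "D $ 2 = 1 + c" using r[of 2] D0 by (simp add: fps_X_power_nth)
  have D3: "D $ 3 = 0" using r[of 3] D1 by (simp add: fps_X_power_nth)
  have D4: "D $ 4 = 1 + c" using r[of 4] D2 by (simp add: fps_X_power_nth)
  have Dn: "D $ 0 = F $ 1" "D $ 1 = 2 * F $ 2" "D $ 2 = 3 * F $ 3" "D $ 3 = 4 * F $ 4" "D $ 4 = 5 * F $ 5"
    by (simp_all add: D_def eval_nat_numeral)
  have "F $ 2 = 0" using Dn(2) D1 by simp
  moreover have "F $ 3 = (1 + c) / 3" using Dn(3) D2 by (simp add: field_simps)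
  moreover have "F $ 4 = 0" using Dn(4) D3 by simp
  moreover have "F $ 5 = (1 + c) / 5" using Dn(5) D4 by (simp add: field_simps)
  moreover have "F $ 1 = 1" using Dn(1) D0 by simp
  ultimately show "tcoeff f 2 = 0" "tcoeff f 3 = (1 + c) / 3" "tcoeff f 4 = 0" "tcoeff f 5 = (1 + c) / 5"
    "deriv f 0 = 1"
    by (simp_all add: tcoeff_fps F_def fps_expansion_def)
qed

definition atf :: "complex \<Rightarrow> complex" where "atf z = 1/2 * (Ln (1 + z) - Ln (1 - z))"
definition btf :: "complex \<Rightarrow> complex" where "btf z = (Ln (1 + z) - Ln (1 - z)) - z"

lemma atf_props:
  shows "convex_fun atf" "tcoeff atf 2 = 0" "tcoeff atf 3 = 1/3" "tcoeff atf 4 = 0" "tcoeff atf 5 = 1/5"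
proof -
  have hol: "atf holomorphic_on ball 0 1" unfolding atf_def[abs_def]
    using not_nonpos by (intro holomorphic_intros) auto
  have der: "(atf has_field_derivative 1 / (1 - z^2)) (at z)" if "z \<in> ball 0 1" for z
  proof -
    have "(atf has_field_derivative 1/2 * (2 / (1 - z^2))) (at z)"
      unfolding atf_def[abs_def] by (rule DERIV_cmult[OF lnlog_der[OF that]])
    then show ?thesis by simp
  qed
  have d: "deriv atf z = 1 / (1 - z^2)" if "z \<in> ball 0 1" for z using DERIV_imp_deriv[OF der[OF that]] .
  have dd: "deriv (deriv atf) z = 2 * z / (1 - z^2)^2" if z: "z \<in> ball 0 1" for z
  proof -
    have "deriv (deriv atf) z = deriv (\<lambda>z. 1 / (1 - z^2)) z"
      by (rule deriv_cong_ev[OF _ refl]) (use eventually_nhds_in_open[OF open_ball z] d in \<open>auto elim!: eventually_mono\<close>)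
    also have "((\<lambda>z. 1 / (1 - z^2)) has_field_derivative 2 * z / (1 - z^2)^2) (at z)"
      using nz2[OF z] by (auto intro!: derivative_eq_intros simp: field_simps power2_eq_square)
    then have "deriv (\<lambda>z. 1 / (1 - z^2)) z = 2 * z / (1 - z^2)^2" by (rule DERIV_imp_deriv)
    finally show ?thesis .
  qed
  have f0: "atf 0 = 0" by (simp add: atf_def)
  have idc: "(1 - z^2) * deriv atf z = 1 + 0 * z^2" if "z \<in> ball 0 1" for z
    using nz2[OF that] d[OF that] by simp
  note co = deriv_coeffs_sq[OF hol f0 idc]
  show "tcoeff atf 2 = 0" "tcoeff atf 3 = 1/3" "tcoeff atf 4 = 0" "tcoeff atf 5 = 1/5" using co by simp_all
  have q: "1 + z * deriv (deriv atf) z / deriv atf z = (1 + z^2) / (1 - z^2)" if z: "z \<in> ball 0 1" for z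
  proof -
    have gen: "1 + z * (2 * z / w^2) / (1 / w) = (w + 2 * z^2) / w" if "w \<noteq> 0" for w :: complex
      using that by (simp add: field_simps power2_eq_square)
    show ?thesis using gen[OF nz2[OF z]] by (simp add: d[OF z] dd[OF z])
  qed
  show "convex_fun atf" unfolding convex_fun_def normalized_analytic_def
    using hol f0 co(5) q d re_cayley[OF nzs] nz2 by auto
qed

lemma btf_props:
  shows "bounded_turning btf" "tcoeff btf 2 = 0" "tcoeff btf 3 = 2/3" "tcoeff btf 4 = 0" "tcoeff btf 5 = 2/5"
proof -
  have hol: "btf holomorphic_on ball 0 1" unfolding btf_def[abs_def]
    using not_nonpos by (intro holomorphic_intros) auto
  have der: "(btf has_field_derivative 2 / (1 - z^2) - 1) (at z)" if "z \<in> ball 0 1" for z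
    unfolding btf_def[abs_def] by (intro derivative_intros lnlog_der[OF that])
  have d: "deriv btf z = 2 / (1 - z^2) - 1" if "z \<in> ball 0 1" for z using DERIV_imp_deriv[OF der[OF that]] .
  have f0: "btf 0 = 0" by (simp add: btf_def)
  have idc: "(1 - z^2) * deriv btf z = 1 + 1 * z^2" if "z \<in> ball 0 1" for z
    using nz2[OF that] d[OF that] by (simp add: field_simps)
  note co = deriv_coeffs_sq[OF hol f0 idc]
  show "tcoeff btf 2 = 0" "tcoeff btf 3 = 2/3" "tcoeff btf 4 = 0" "tcoeff btf 5 = 2/5" using co by simp_all
  have q: "deriv btf z = (1 + z^2) / (1 - z^2)" if z: "z \<in> ball 0 1" for z
    using nz2[OF z] d[OF z] by (simp add: field_simps)
  show "bounded_turning btf" unfolding bounded_turning_def normalized_analytic_def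
    using hol f0 co(5) q re_cayley[OF nzs] by auto
qed

lemma sharp_from:
  assumes cls: "\<And>f. P f \<Longrightarrow> normalized_analytic f"
    and bnd: "\<And>f. P f \<Longrightarrow> tcoeff f 2 = 0 \<Longrightarrow>
       norm (- 3 * (tcoeff f 3)^3 + tcoeff f 3 * tcoeff f 5 - (tcoeff f 4)^2) \<le> B"
    and ex: "P f0" "tcoeff f0 2 = 0"
      "norm (- 3 * (tcoeff f0 3)^3 + tcoeff f0 3 * tcoeff f0 5 - (tcoeff f0 4)^2) = B"
  shows "sharp_inv_hankel_bound P B"
  unfolding sharp_inv_hankel_bound_def
proof (intro conjI allI impI)
  fix f g S assume a: "P f \<and> tcoeff f 2 = 0 \<and> local_inverse f g S"
  then show "cmod (hankel23 g) \<le> B"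
    using hankel_formula[OF cls] bnd by auto
next
  have na: "normalized_analytic f0" using cls ex(1) .
  then obtain g S where li: "local_inverse f0 g S"
    using local_inv_exists[of f0] by (auto simp: normalized_analytic_def)
  have "cmod (hankel23 g) = B" using hankel_formula[OF na ex(2) li] ex(3) by simp
  then show "\<exists>f g S. P f \<and> tcoeff f 2 = 0 \<and> local_inverse f g S \<and> cmod (hankel23 g) = B"
    using ex li by blast
qed

theorem theorem1:
  shows "sharp_inv_hankel_bound bounded_turning (28/45) \<and>
         sharp_inv_hankel_bound convex_fun (2/45) \<and>
         sharp_inv_hankel_bound starlike_fun 2 \<and>
         sharp_inv_hankel_bound starlike_sym 2"
proof (intro conjI)
  show "sharp_inv_hankel_bound bounded_turning (28/45)"
  proof (rule sharp_from[OF _ bound_a])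
    show "normalized_analytic f" if "bounded_turning f" for f using that by (simp add: bounded_turning_def)
    show "bounded_turning btf" "tcoeff btf 2 = 0" using btf_props by auto
    have "- 3 * (tcoeff btf 3)^3 + tcoeff btf 3 * tcoeff btf 5 - (tcoeff btf 4)^2 = - (28/45)"
      by (simp only: btf_props(3,4,5)) (simp add: power3_eq_cube)
    then show "cmod (- 3 * (tcoeff btf 3)^3 + tcoeff btf 3 * tcoeff btf 5 - (tcoeff btf 4)^2) = 28/45"
      by simp
  qed
  show "sharp_inv_hankel_bound convex_fun (2/45)"
  proof (rule sharp_from[OF _ bound_b])
    show "normalized_analytic f" if "convex_fun f" for f using that by (simp add: convex_fun_def)
    show "convex_fun atf" "tcoeff atf 2 = 0" using atf_props by auto
    have "- 3 * (tcoeff atf 3)^3 + tcoeff atf 3 * tcoeff atf 5 - (tcoeff atf 4)^2 = - (2/45)"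
      by (simp only: atf_props(3,4,5)) (simp add: power3_eq_cube)
    then show "cmod (- 3 * (tcoeff atf 3)^3 + tcoeff atf 3 * tcoeff atf 5 - (tcoeff atf 4)^2) = 2/45"
      by simp
  qed
  have kh: "- 3 * (tcoeff koebe2 3)^3 + tcoeff koebe2 3 * tcoeff koebe2 5 - (tcoeff koebe2 4)^2 = - 2"
    by (simp only: koebe2_props(5,6,7)) simp
  show "sharp_inv_hankel_bound starlike_fun 2"
  proof (rule sharp_from[OF _ bound_c])
    show "normalized_analytic f" if "starlike_fun f" for f using that by (simp add: starlike_fun_def)
    show "starlike_fun koebe2" "tcoeff koebe2 2 = 0" using koebe2_props by auto
    show "cmod (- 3 * (tcoeff koebe2 3)^3 + tcoeff koebe2 3 * tcoeff koebe2 5 - (tcoeff koebe2 4)^2) = 2"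
      unfolding kh by simp
  qed
  show "sharp_inv_hankel_bound starlike_sym 2"
  proof (rule sharp_from[OF _ bound_d])
    show "normalized_analytic f" if "starlike_sym f" for f using that by (simp add: starlike_sym_def)
    show "starlike_sym koebe2" "tcoeff koebe2 2 = 0" using koebe2_props by auto
    show "cmod (- 3 * (tcoeff koebe2 3)^3 + tcoeff koebe2 3 * tcoeff koebe2 5 - (tcoeff koebe2 4)^2) = 2"
      unfolding kh by simp
  qed
qed

end
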